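(* If a protocol $\Pi$ with $m$ memory states is not parsimonious, then there exists a parsimonious protocol $\Pi'$ with at most $m$ memory states such that $U^R(\Pi)\le U^R(\Pi')$.
   Context: Setting. The state of nature is $\theta\in\Theta=\{H,L\}$ with prior $\Pr(\theta=H)=p\in(0,1)$. A sender privately observes $\theta$; a receiver does not. $S$ is a finite signal set; conditional on $\theta$, signals are i.i.d. with distribution $\pi_\theta$ on $S$, where $\pi_\theta(s)>0$ for all $s\in S,\theta\in\Theta$, and $\pi_H\neq\pi_L$. The receiver has a finite set of memory states $M$ and chooses a protocol $\Pi=(f,g,a)$: a transition function $f:M\times S\to\Delta(M)$ ($f(i,s)(j)$ is the probability of moving from memory state $i$ to $j$ after signal $s$), an initial distribution $g\in\Delta(M)$ of $m_0$, and an action rule $a:M\to[0,1]$ (probability of action $H$ if the game ends in that memory state). A sender strategy is $\sigma:M\times\Theta\to[0,1]$, the probability of stopping in the current memory state given $\theta$. Timing: $m_0\sim g$; in each period $t=0,1,\dots$, with current memory state $m_t$, the game ends if $m_t$ is absorbing ($f(m_t,s)(m_t)=1$ for all $s$); otherwise the sender stops with probability $\sigma(m_t,\theta)$, ending the game; if not stopped, a signal $s_t\sim\pi_\theta$ is generated and $m_{t+1}\sim f(m_t,s_t)$. When the game ends in state $m_t$ the receiver takes action $H$ with probability $a(m_t)$ and $L$ otherwise. The receiver's payoff is $1$ if the action equals $\theta$ and $0$ otherwise; the sender's payoff is $1$ if the action is $H$ and $0$ otherwise; there is no discounting; if the game never ends both get $0$. $U^S(\Pi,\sigma),U^R(\Pi,\sigma)$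 denote expected payoffs, $\mathrm{br}(\Pi)=\arg\sup_\sigma U^S(\Pi,\sigma)$ is the set of sender best responses, and $U^R(\Pi):=U^R(\Pi,\sigma)$ for $\sigma\in\mathrm{br}(\Pi)$. Since $\pi_\theta$ has full support, which transitions $i\to j$ have positive probability does not depend on $\theta$; the terms absorbing, transient, recurrent communicating class applied to $\Pi$ refer to the Markov chain on $M$ induced by $f$ with signals drawn from $\pi_\theta$ (sender never stopping), and mean the same for both $\theta$. A protocol is parsimonious if (i) it has exactly two absorbing memory states, one in which $a=0$ ($L$ played with probability 1) and one in which $a=1$ ($H$ played with probability 1), and (ii) all other memory states are transient with $a=0$. *)

theory Defs
  imports Complex_Main
begin

datatype theta = H | L

text \<open>Memory states are natural numbers; a protocol with m memory states uses
  the memory set M = {..<m}.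
  A transition function is f :: nat => 's => nat => real with f i s j the
  probability of moving from i to j after signal s; g is the initial
  distribution and a the action rule.  A sender strategy is
  sigma :: nat => theta => real (probability of stopping).\<close>

definition is_dist :: "nat set \<Rightarrow> (nat \<Rightarrow> real) \<Rightarrow> bool" where
  "is_dist M d \<longleftrightarrow> (\<forall>j\<in>M. 0 \<le> d j) \<and> (\<Sum>j\<in>M. d j) = 1"

definition is_protocol ::
  "nat set \<Rightarrow> (nat \<Rightarrow> 's \<Rightarrow> nat \<Rightarrow> real) \<Rightarrow> (nat \<Rightarrow> real) \<Rightarrow> (nat \<Rightarrow> real) \<Rightarrow> bool" where
  "is_protocol M f g a \<longleftrightarrow>
     finite M \<and> (\<forall>i\<in>M. \<forall>s. is_dist M (f i s)) \<and> is_dist M g \<and> (\<forall>i\<in>M. 0 \<le> a i \<and> a i \<le> 1)"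

definition valid_signals :: "(theta \<Rightarrow> 's::finite \<Rightarrow> real) \<Rightarrow> bool" where
  "valid_signals \<pi> \<longleftrightarrow> (\<forall>\<theta> s. 0 < \<pi> \<theta> s) \<and> (\<forall>\<theta>. (\<Sum>s\<in>UNIV. \<pi> \<theta> s) = 1) \<and> \<pi> H \<noteq> \<pi> L"

definition valid_strategy :: "nat set \<Rightarrow> (nat \<Rightarrow> theta \<Rightarrow> real) \<Rightarrow> bool" where
  "valid_strategy M \<sigma> \<longleftrightarrow> (\<forall>i\<in>M. \<forall>\<theta>. 0 \<le> \<sigma> i \<theta> \<and> \<sigma> i \<theta> \<le> 1)"

definition absorbing :: "(nat \<Rightarrow> 's \<Rightarrow> nat \<Rightarrow> real) \<Rightarrow> nat \<Rightarrow> bool" where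
  "absorbing f i \<longleftrightarrow> (\<forall>s. f i s i = 1)"

definition Ptrans :: "(theta \<Rightarrow> 's::finite \<Rightarrow> real) \<Rightarrow> (nat \<Rightarrow> 's \<Rightarrow> nat \<Rightarrow> real) \<Rightarrow> theta \<Rightarrow> nat \<Rightarrow> nat \<Rightarrow> real" where
  "Ptrans \<pi> f \<theta> i j = (\<Sum>s\<in>UNIV. \<pi> \<theta> s * f i s j)"

text \<open>taboo i n j: probability, starting from i, of being in j at step n+1
  without having visited i at steps 1..n.\<close>
fun taboo :: "nat set \<Rightarrow> (theta \<Rightarrow> 's::finite \<Rightarrow> real) \<Rightarrow> (nat \<Rightarrow> 's \<Rightarrow> nat \<Rightarrow> real) \<Rightarrow> theta
              \<Rightarrow> nat \<Rightarrow> nat \<Rightarrow> nat \<Rightarrow> real" where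
  "taboo M \<pi> f \<theta> i 0 j = Ptrans \<pi> f \<theta> i j"
| "taboo M \<pi> f \<theta> i (Suc n) j = (\<Sum>k\<in>M - {i}. taboo M \<pi> f \<theta> i n k * Ptrans \<pi> f \<theta> k j)"

definition return_prob :: "nat set \<Rightarrow> (theta \<Rightarrow> 's::finite \<Rightarrow> real) \<Rightarrow> (nat \<Rightarrow> 's \<Rightarrow> nat \<Rightarrow> real) \<Rightarrow> theta \<Rightarrow> nat \<Rightarrow> real" where
  "return_prob M \<pi> f \<theta> i = (\<Sum>n. taboo M \<pi> f \<theta> i n i)"

definition transient :: "nat set \<Rightarrow> (theta \<Rightarrow> 's::finite \<Rightarrow> real) \<Rightarrow> (nat \<Rightarrow> 's \<Rightarrow> nat \<Rightarrow> real) \<Rightarrow> theta \<Rightarrow> nat \<Rightarrow> bool" where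
  "transient M \<pi> f \<theta> i \<longleftrightarrow> return_prob M \<pi> f \<theta> i < 1"

definition parsimonious :: "nat set \<Rightarrow> (theta \<Rightarrow> 's::finite \<Rightarrow> real) \<Rightarrow> (nat \<Rightarrow> 's \<Rightarrow> nat \<Rightarrow> real) \<Rightarrow> (nat \<Rightarrow> real) \<Rightarrow> bool" where
  "parsimonious M \<pi> f a \<longleftrightarrow>
     (\<exists>l\<in>M. \<exists>h\<in>M. {i\<in>M. absorbing f i} = {l, h} \<and> l \<noteq> h \<and> a l = 0 \<and> a h = 1 \<and>
        (\<forall>i\<in>M - {l, h}. (\<forall>\<theta>. transient M \<pi> f \<theta> i) \<and> a i = 0))"

definition stopP :: "(nat \<Rightarrow> 's \<Rightarrow> nat \<Rightarrow> real) \<Rightarrow> (nat \<Rightarrow> theta \<Rightarrow> real) \<Rightarrow> theta \<Rightarrow> nat \<Rightarrow> real" where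
  "stopP f \<sigma> \<theta> i = (if absorbing f i then 1 else \<sigma> i \<theta>)"

text \<open>alive t j: probability that the game has not ended before period t and m_t = j.\<close>
fun alive :: "nat set \<Rightarrow> (theta \<Rightarrow> 's::finite \<Rightarrow> real) \<Rightarrow> (nat \<Rightarrow> 's \<Rightarrow> nat \<Rightarrow> real) \<Rightarrow> (nat \<Rightarrow> real)
              \<Rightarrow> (nat \<Rightarrow> theta \<Rightarrow> real) \<Rightarrow> theta \<Rightarrow> nat \<Rightarrow> nat \<Rightarrow> real" where
  "alive M \<pi> f g \<sigma> \<theta> 0 j = g j"
| "alive M \<pi> f g \<sigma> \<theta> (Suc t) j =
     (\<Sum>i\<in>M. alive M \<pi> f g \<sigma> \<theta> t i * (1 - stopP f \<sigma> \<theta> i) * Ptrans \<pi> f \<theta> i j)"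

definition endprob :: "nat set \<Rightarrow> (theta \<Rightarrow> 's::finite \<Rightarrow> real) \<Rightarrow> (nat \<Rightarrow> 's \<Rightarrow> nat \<Rightarrow> real) \<Rightarrow> (nat \<Rightarrow> real)
              \<Rightarrow> (nat \<Rightarrow> theta \<Rightarrow> real) \<Rightarrow> theta \<Rightarrow> nat \<Rightarrow> real" where
  "endprob M \<pi> f g \<sigma> \<theta> i = (\<Sum>t. alive M \<pi> f g \<sigma> \<theta> t i * stopP f \<sigma> \<theta> i)"

definition US :: "real \<Rightarrow> nat set \<Rightarrow> (theta \<Rightarrow> 's::finite \<Rightarrow> real) \<Rightarrow> (nat \<Rightarrow> 's \<Rightarrow> nat \<Rightarrow> real)
              \<Rightarrow> (nat \<Rightarrow> real) \<Rightarrow> (nat \<Rightarrow> real) \<Rightarrow> (nat \<Rightarrow> theta \<Rightarrow> real) \<Rightarrow> real" where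
  "US p M \<pi> f g a \<sigma> =
     p * (\<Sum>i\<in>M. endprob M \<pi> f g \<sigma> H i * a i) + (1 - p) * (\<Sum>i\<in>M. endprob M \<pi> f g \<sigma> L i * a i)"

definition UR :: "real \<Rightarrow> nat set \<Rightarrow> (theta \<Rightarrow> 's::finite \<Rightarrow> real) \<Rightarrow> (nat \<Rightarrow> 's \<Rightarrow> nat \<Rightarrow> real)
              \<Rightarrow> (nat \<Rightarrow> real) \<Rightarrow> (nat \<Rightarrow> real) \<Rightarrow> (nat \<Rightarrow> theta \<Rightarrow> real) \<Rightarrow> real" where
  "UR p M \<pi> f g a \<sigma> =
     p * (\<Sum>i\<in>M. endprob M \<pi> f g \<sigma> H i * a i) + (1 - p) * (\<Sum>i\<in>M. endprob M \<pi> f g \<sigma> L i * (1 - a i))"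

definition br :: "real \<Rightarrow> nat set \<Rightarrow> (theta \<Rightarrow> 's::finite \<Rightarrow> real) \<Rightarrow> (nat \<Rightarrow> 's \<Rightarrow> nat \<Rightarrow> real)
              \<Rightarrow> (nat \<Rightarrow> real) \<Rightarrow> (nat \<Rightarrow> real) \<Rightarrow> (nat \<Rightarrow> theta \<Rightarrow> real) set" where
  "br p M \<pi> f g a =
     {\<sigma>. valid_strategy M \<sigma> \<and> (\<forall>\<sigma>'. valid_strategy M \<sigma>' \<longrightarrow> US p M \<pi> f g a \<sigma>' \<le> US p M \<pi> f g a \<sigma>)}"

end

theory Submission
  imports Defs
begin


lemma Ptrans_nonneg:
  assumes "is_protocol M f g a" "valid_signals \<pi>" "i \<in> M" "j \<in> M"
  shows "0 \<le> Ptrans \<pi> f \<theta> i j"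
proof -
  have "\<forall>s. 0 \<le> f i s j" using assms unfolding is_protocol_def is_dist_def by blast
  moreover have "\<forall>s. 0 < \<pi> \<theta> s" using assms(2) unfolding valid_signals_def by blast
  ultimately show ?thesis unfolding Ptrans_def by (intro sum_nonneg) (simp add: less_imp_le)
qed

lemma Ptrans_sum:
  assumes "is_protocol M f g a" "valid_signals \<pi>" "i \<in> M"
  shows "(\<Sum>j\<in>M. Ptrans \<pi> f \<theta> i j) = 1"
proof -
  have "(\<Sum>j\<in>M. Ptrans \<pi> f \<theta> i j) = (\<Sum>s\<in>UNIV. \<pi> \<theta> s * (\<Sum>j\<in>M. f i s j))"
    unfolding Ptrans_def sum_distrib_left by (rule sum.swap)
  also have "\<dots> = (\<Sum>s\<in>UNIV. \<pi> \<theta> s)"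
    using assms unfolding is_protocol_def is_dist_def by simp
  also have "\<dots> = 1" using assms(2) unfolding valid_signals_def by blast
  finally show ?thesis .
qed

lemma Ptrans_pos_iff:
  assumes "is_protocol M f g a" "valid_signals \<pi>" "i \<in> M" "j \<in> M"
  shows "0 < Ptrans \<pi> f \<theta> i j \<longleftrightarrow> (\<exists>s. 0 < f i s j)"
proof -
  have nn: "\<forall>s. 0 \<le> f i s j" using assms unfolding is_protocol_def is_dist_def by blast
  have pp: "\<forall>s. 0 < \<pi> \<theta> s" using assms(2) unfolding valid_signals_def by blast
  show ?thesis
  proof
    assume "0 < Ptrans \<pi> f \<theta> i j"
    then show "\<exists>s. 0 < f i s j" unfolding Ptrans_def
      by (metis (no_types, lifting) mult_zero_right nn order_less_le sum.neutral)
  next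
    assume "\<exists>s. 0 < f i s j"
    then obtain s where s: "0 < f i s j" by blast
    have "\<pi> \<theta> s * f i s j \<le> (\<Sum>s\<in>UNIV. \<pi> \<theta> s * f i s j)"
      by (rule member_le_sum) (use nn pp in \<open>auto intro: mult_nonneg_nonneg less_imp_le\<close>)
    moreover have "0 < \<pi> \<theta> s * f i s j" using s pp by simp
    ultimately show "0 < Ptrans \<pi> f \<theta> i j" unfolding Ptrans_def by linarith
  qed
qed

lemma stopP_bounds:
  assumes "valid_strategy M \<sigma>" "i \<in> M"
  shows "0 \<le> stopP f \<sigma> \<theta> i" "stopP f \<sigma> \<theta> i \<le> 1"
  using assms unfolding valid_strategy_def stopP_def by auto

lemma alive_nonneg:
  assumes "is_protocol M f g a" "valid_signals \<pi>" "valid_strategy M \<sigma>" "j \<in> M"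
  shows "0 \<le> alive M \<pi> f g \<sigma> \<theta> t j"
  using assms(4)
proof (induction t arbitrary: j)
  case 0
  then show ?case using assms(1) by (simp add: is_protocol_def is_dist_def)
next
  case (Suc t)
  show ?case
    by (simp, intro sum_nonneg mult_nonneg_nonneg)
      (use Suc assms stopP_bounds Ptrans_nonneg in \<open>auto\<close>)
qed

lemma alive_mass:
  assumes "is_protocol M f g a" "valid_signals \<pi>"
  shows "(\<Sum>j\<in>M. alive M \<pi> f g \<sigma> \<theta> (Suc t) j) = (\<Sum>i\<in>M. alive M \<pi> f g \<sigma> \<theta> t i * (1 - stopP f \<sigma> \<theta> i))"
proof -
  have "(\<Sum>j\<in>M. alive M \<pi> f g \<sigma> \<theta> (Suc t) j) =
        (\<Sum>i\<in>M. alive M \<pi> f g \<sigma> \<theta> t i * (1 - stopP f \<sigma> \<theta> i) * (\<Sum>j\<in>M. Ptrans \<pi> f \<theta> i j))"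
    unfolding alive.simps sum_distrib_left by (rule sum.swap)
  also have "\<dots> = (\<Sum>i\<in>M. alive M \<pi> f g \<sigma> \<theta> t i * (1 - stopP f \<sigma> \<theta> i))"
    by (rule sum.cong) (use Ptrans_sum[OF assms] in auto)
  finally show ?thesis .
qed

lemma g_sum: "is_protocol M f g a \<Longrightarrow> (\<Sum>j\<in>M. g j) = 1"
  by (simp add: is_protocol_def is_dist_def)

lemma alive_telescope:
  assumes "is_protocol M f g a" "valid_signals \<pi>"
  shows "(\<Sum>t<T. \<Sum>i\<in>M. alive M \<pi> f g \<sigma> \<theta> t i * stopP f \<sigma> \<theta> i) = 1 - (\<Sum>i\<in>M. alive M \<pi> f g \<sigma> \<theta> T i)"
proof (induction T)
  case 0
  then show ?case using g_sum[OF assms(1)] by simp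
next
  case (Suc T)
  have "(\<Sum>i\<in>M. alive M \<pi> f g \<sigma> \<theta> T i * stopP f \<sigma> \<theta> i) =
      (\<Sum>i\<in>M. alive M \<pi> f g \<sigma> \<theta> T i) - (\<Sum>i\<in>M. alive M \<pi> f g \<sigma> \<theta> T i * (1 - stopP f \<sigma> \<theta> i))"
    by (simp add: algebra_simps sum_subtractf)
  then show ?case using Suc alive_mass[OF assms, of \<sigma> \<theta> T] by simp
qed

lemma finite_M: "is_protocol M f g a \<Longrightarrow> finite M" by (simp add: is_protocol_def)

lemma endterm_nonneg:
  assumes "is_protocol M f g a" "valid_signals \<pi>" "valid_strategy M \<sigma>" "i \<in> M"
  shows "0 \<le> alive M \<pi> f g \<sigma> \<theta> t i * stopP f \<sigma> \<theta> i"
  by (intro mult_nonneg_nonneg alive_nonneg[OF assms] stopP_bounds(1)[OF assms(3,4)])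

lemma partial_end_le1:
  assumes "is_protocol M f g a" "valid_signals \<pi>" "valid_strategy M \<sigma>"
  shows "(\<Sum>t<T. \<Sum>i\<in>M. alive M \<pi> f g \<sigma> \<theta> t i * stopP f \<sigma> \<theta> i) \<le> 1"
proof -
  have "0 \<le> (\<Sum>i\<in>M. alive M \<pi> f g \<sigma> \<theta> T i)"
    by (rule sum_nonneg) (use alive_nonneg[OF assms] in auto)
  then show ?thesis using alive_telescope[OF assms(1,2)] by simp
qed

lemma endterm_summable:
  assumes "is_protocol M f g a" "valid_signals \<pi>" "valid_strategy M \<sigma>" "i \<in> M"
  shows "summable (\<lambda>t. alive M \<pi> f g \<sigma> \<theta> t i * stopP f \<sigma> \<theta> i)"
proof (rule summableI_nonneg_bounded[where x=1])
  show "0 \<le> alive M \<pi> f g \<sigma> \<theta> t i * stopP f \<sigma> \<theta> i" for t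
    by (rule endterm_nonneg[OF assms])
  show "(\<Sum>t<T. alive M \<pi> f g \<sigma> \<theta> t i * stopP f \<sigma> \<theta> i) \<le> 1" for T
  proof -
    have "(\<Sum>t<T. alive M \<pi> f g \<sigma> \<theta> t i * stopP f \<sigma> \<theta> i) \<le>
          (\<Sum>t<T. \<Sum>i\<in>M. alive M \<pi> f g \<sigma> \<theta> t i * stopP f \<sigma> \<theta> i)"
      by (intro sum_mono member_le_sum) (use assms finite_M endterm_nonneg in auto)
    then show ?thesis using partial_end_le1[OF assms(1-3), where T=T and \<theta>=\<theta>] by linarith
  qed
qed

lemma endprob_nonneg:
  assumes "is_protocol M f g a" "valid_signals \<pi>" "valid_strategy M \<sigma>" "i \<in> M"
  shows "0 \<le> endprob M \<pi> f g \<sigma> \<theta> i"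
  unfolding endprob_def by (rule suminf_nonneg[OF endterm_summable[OF assms]]) (rule endterm_nonneg[OF assms])

lemma endprob_sum_eq:
  assumes "is_protocol M f g a" "valid_signals \<pi>" "valid_strategy M \<sigma>"
  shows "(\<lambda>T. \<Sum>t<T. \<Sum>i\<in>M. alive M \<pi> f g \<sigma> \<theta> t i * stopP f \<sigma> \<theta> i) \<longlonglongrightarrow> (\<Sum>i\<in>M. endprob M \<pi> f g \<sigma> \<theta> i)"
proof -
  have "(\<lambda>t. \<Sum>i\<in>M. alive M \<pi> f g \<sigma> \<theta> t i * stopP f \<sigma> \<theta> i) sums (\<Sum>i\<in>M. endprob M \<pi> f g \<sigma> \<theta> i)"
    unfolding endprob_def
    by (rule sums_sum) (use endterm_summable[OF assms] in \<open>auto intro: summable_sums\<close>)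
  then show ?thesis by (simp add: sums_def)
qed

lemma endprob_sum_le1:
  assumes "is_protocol M f g a" "valid_signals \<pi>" "valid_strategy M \<sigma>"
  shows "(\<Sum>i\<in>M. endprob M \<pi> f g \<sigma> \<theta> i) \<le> 1"
  by (rule LIMSEQ_le_const2[OF endprob_sum_eq[OF assms]]) (use partial_end_le1[OF assms] in auto)

lemma endprob_sum_1:
  assumes "is_protocol M f g a" "valid_signals \<pi>" "valid_strategy M \<sigma>"
    and "(\<lambda>T. \<Sum>i\<in>M. alive M \<pi> f g \<sigma> \<theta> T i) \<longlonglongrightarrow> 0"
  shows "(\<Sum>i\<in>M. endprob M \<pi> f g \<sigma> \<theta> i) = 1"
proof -
  have "(\<lambda>T. 1 - (\<Sum>i\<in>M. alive M \<pi> f g \<sigma> \<theta> T i)) \<longlonglongrightarrow> 1 - 0"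
    by (intro tendsto_intros assms(4))
  then have "(\<lambda>T. \<Sum>t<T. \<Sum>i\<in>M. alive M \<pi> f g \<sigma> \<theta> t i * stopP f \<sigma> \<theta> i) \<longlonglongrightarrow> 1"
    using alive_telescope[OF assms(1,2)] by simp
  from LIMSEQ_unique[OF endprob_sum_eq[OF assms(1-3)] this] show ?thesis .
qed



definition edges :: "nat set \<Rightarrow> (nat \<Rightarrow> 's \<Rightarrow> nat \<Rightarrow> real) \<Rightarrow> (nat \<times> nat) set" where
  "edges M f = {(i,j). i \<in> M \<and> j \<in> M \<and> (\<exists>s. 0 < f i s j)}"

lemma edges_M: "(i,j) \<in> edges M f \<Longrightarrow> i \<in> M \<and> j \<in> M"
  by (simp add: edges_def)

lemma rtrancl_edges_M: "(i,j) \<in> (edges M f)\<^sup>* \<Longrightarrow> i \<in> M \<Longrightarrow> j \<in> M"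
  by (induction rule: rtrancl_induct) (auto simp: edges_def)

lemma edge_Ptrans_pos:
  assumes "is_protocol M f g a" "valid_signals \<pi>" "(i,j) \<in> edges M f"
  shows "0 < Ptrans \<pi> f \<theta> i j"
  using assms Ptrans_pos_iff[OF assms(1,2)] by (auto simp: edges_def)

fun rr :: "nat set \<Rightarrow> (theta \<Rightarrow> 's::finite \<Rightarrow> real) \<Rightarrow> (nat \<Rightarrow> 's \<Rightarrow> nat \<Rightarrow> real) \<Rightarrow> (nat \<Rightarrow> theta \<Rightarrow> real) \<Rightarrow> theta \<Rightarrow> nat \<Rightarrow> nat \<Rightarrow> real" where
  "rr M \<pi> f \<sigma> \<theta> 0 i = 1"
| "rr M \<pi> f \<sigma> \<theta> (Suc n) i = (\<Sum>k\<in>M. (1 - stopP f \<sigma> \<theta> i) * Ptrans \<pi> f \<theta> i k * rr M \<pi> f \<sigma> \<theta> n k)"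

lemma alive_rr:
  "(\<Sum>i\<in>M. alive M \<pi> f g \<sigma> \<theta> (t + n) i) = (\<Sum>i\<in>M. alive M \<pi> f g \<sigma> \<theta> t i * rr M \<pi> f \<sigma> \<theta> n i)"
proof (induction n arbitrary: t)
  case 0
  then show ?case by simp
next
  case (Suc n)
  have "(\<Sum>i\<in>M. alive M \<pi> f g \<sigma> \<theta> (t + Suc n) i) = (\<Sum>i\<in>M. alive M \<pi> f g \<sigma> \<theta> (Suc t + n) i)"
    by simp
  also have "\<dots> = (\<Sum>i\<in>M. alive M \<pi> f g \<sigma> \<theta> (Suc t) i * rr M \<pi> f \<sigma> \<theta> n i)"
    by (rule Suc.IH)
  also have "\<dots> = (\<Sum>i\<in>M. \<Sum>k\<in>M. alive M \<pi> f g \<sigma> \<theta> t k * (1 - stopP f \<sigma> \<theta> k) * Ptrans \<pi> f \<theta> k i * rr M \<pi> f \<sigma> \<theta> n i)"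
    by (simp add: sum_distrib_right)
  also have "\<dots> = (\<Sum>k\<in>M. \<Sum>i\<in>M. alive M \<pi> f g \<sigma> \<theta> t k * (1 - stopP f \<sigma> \<theta> k) * Ptrans \<pi> f \<theta> k i * rr M \<pi> f \<sigma> \<theta> n i)"
    by (rule sum.swap)
  also have "\<dots> = (\<Sum>k\<in>M. alive M \<pi> f g \<sigma> \<theta> t k * rr M \<pi> f \<sigma> \<theta> (Suc n) k)"
    by (simp add: sum_distrib_left mult.assoc)
  finally show ?case .
qed

context
  fixes M and \<pi> :: "theta \<Rightarrow> 's::finite \<Rightarrow> real" and f :: "nat \<Rightarrow> 's \<Rightarrow> nat \<Rightarrow> real" and g :: "nat \<Rightarrow> real" and a :: "nat \<Rightarrow> real" and \<sigma> :: "nat \<Rightarrow> theta \<Rightarrow> real" and \<theta> :: theta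
  assumes P: "is_protocol M f g a" and V: "valid_signals \<pi>" and S: "valid_strategy M \<sigma>"
begin

lemma rr_bounds: "i \<in> M \<Longrightarrow> 0 \<le> rr M \<pi> f \<sigma> \<theta> n i \<and> rr M \<pi> f \<sigma> \<theta> n i \<le> 1"
proof (induction n arbitrary: i)
  case 0
  then show ?case by simp
next
  case (Suc n)
  have s: "0 \<le> stopP f \<sigma> \<theta> i" "stopP f \<sigma> \<theta> i \<le> 1" using stopP_bounds[OF S Suc.prems] by auto
  have "0 \<le> rr M \<pi> f \<sigma> \<theta> (Suc n) i"
    by (simp, intro sum_nonneg mult_nonneg_nonneg) (use s Suc Ptrans_nonneg[OF P V] in auto)
  moreover have "rr M \<pi> f \<sigma> \<theta> (Suc n) i \<le> (\<Sum>k\<in>M. (1 - stopP f \<sigma> \<theta> i) * Ptrans \<pi> f \<theta> i k)"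
    by (simp, intro sum_mono mult_left_le mult_nonneg_nonneg) (use s Suc Ptrans_nonneg[OF P V] in auto)
  moreover have "(\<Sum>k\<in>M. (1 - stopP f \<sigma> \<theta> i) * Ptrans \<pi> f \<theta> i k) = 1 - stopP f \<sigma> \<theta> i"
    by (simp add: sum_distrib_left[symmetric] Ptrans_sum[OF P V Suc.prems])
  ultimately show ?case using s by linarith
qed

lemma rr_Suc_le: "i \<in> M \<Longrightarrow> rr M \<pi> f \<sigma> \<theta> (Suc n) i \<le> rr M \<pi> f \<sigma> \<theta> n i"
proof (induction n arbitrary: i)
  case 0
  then show ?case using rr_bounds[of i "Suc 0"] by simp
next
  case (Suc n)
  have s: "0 \<le> stopP f \<sigma> \<theta> i" "stopP f \<sigma> \<theta> i \<le> 1" using stopP_bounds[OF S Suc.prems] by auto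
  show ?case
    by (subst rr.simps, subst (2) rr.simps, intro sum_mono mult_left_mono mult_nonneg_nonneg)
      (use s Suc Ptrans_nonneg[OF P V] in auto)
qed


lemma rr_mono: "i \<in> M \<Longrightarrow> rr M \<pi> f \<sigma> \<theta> (n + d) i \<le> rr M \<pi> f \<sigma> \<theta> n i"
proof (induction d)
  case 0
  then show ?case by simp
next
  case (Suc d)
  then show ?case using rr_Suc_le[of i "n + d"] by simp
qed

lemma rr_exit:
  assumes "(i,j) \<in> (edges M f)\<^sup>*" "0 < stopP f \<sigma> \<theta> j" "i \<in> M"
  shows "\<exists>n. rr M \<pi> f \<sigma> \<theta> n i < 1"
  using assms
proof (induction rule: converse_rtrancl_induct)
  case base
  have "rr M \<pi> f \<sigma> \<theta> (Suc 0) j = (\<Sum>k\<in>M. (1 - stopP f \<sigma> \<theta> j) * Ptrans \<pi> f \<theta> j k)" by simp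
  also have "\<dots> = 1 - stopP f \<sigma> \<theta> j"
    by (simp add: sum_distrib_left[symmetric] Ptrans_sum[OF P V base(2)])
  finally have "rr M \<pi> f \<sigma> \<theta> (Suc 0) j < 1" using base by simp
  then show ?case by blast
next
  case (step i i2)
  have i2: "i2 \<in> M" using step(1) edges_M by blast
  obtain n where n: "rr M \<pi> f \<sigma> \<theta> n i2 < 1" using step i2 by blast
  have s: "0 \<le> stopP f \<sigma> \<theta> i" "stopP f \<sigma> \<theta> i \<le> 1" using stopP_bounds[OF S step(5)] by auto
  have sum1: "(\<Sum>k\<in>M. (1 - stopP f \<sigma> \<theta> i) * Ptrans \<pi> f \<theta> i k) = 1 - stopP f \<sigma> \<theta> i"
    by (simp add: sum_distrib_left[symmetric] Ptrans_sum[OF P V step(5)])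
  show ?case
  proof (cases "stopP f \<sigma> \<theta> i = 1")
    case True
    have "rr M \<pi> f \<sigma> \<theta> (Suc 0) i = 0" using True by simp
    then show ?thesis by (intro exI[of _ "Suc 0"]) simp
  next
    case False
    have pos: "0 < (1 - stopP f \<sigma> \<theta> i) * Ptrans \<pi> f \<theta> i i2"
      using False s edge_Ptrans_pos[OF P V step(1)] by simp
    have fin: "finite M" using P by (simp add: is_protocol_def)
    have "rr M \<pi> f \<sigma> \<theta> (Suc n) i = (\<Sum>k\<in>M. (1 - stopP f \<sigma> \<theta> i) * Ptrans \<pi> f \<theta> i k * rr M \<pi> f \<sigma> \<theta> n k)"
      by simp
    also have "\<dots> < (\<Sum>k\<in>M. (1 - stopP f \<sigma> \<theta> i) * Ptrans \<pi> f \<theta> i k)"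
    proof (rule sum_strict_mono_ex1[OF fin])
      show "\<forall>k\<in>M. (1 - stopP f \<sigma> \<theta> i) * Ptrans \<pi> f \<theta> i k * rr M \<pi> f \<sigma> \<theta> n k
                 \<le> (1 - stopP f \<sigma> \<theta> i) * Ptrans \<pi> f \<theta> i k"
        using rr_bounds s Ptrans_nonneg[OF P V step(5)]
        by (auto intro!: mult_left_le mult_nonneg_nonneg)
      show "\<exists>k\<in>M. (1 - stopP f \<sigma> \<theta> i) * Ptrans \<pi> f \<theta> i k * rr M \<pi> f \<sigma> \<theta> n k
                 < (1 - stopP f \<sigma> \<theta> i) * Ptrans \<pi> f \<theta> i k"
        using i2 n pos by (intro bexI[of _ i2]) (metis mult.right_neutral mult_strict_left_mono)
    qed
    finally show ?thesis using sum1 s by (intro exI[of _ "Suc n"]) linarith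
  qed
qed

lemma mass_nonneg: "0 \<le> (\<Sum>i\<in>M. alive M \<pi> f g \<sigma> \<theta> t i)"
  by (rule sum_nonneg) (use alive_nonneg[OF P V S] in auto)

lemma mass_decr: "(\<Sum>i\<in>M. alive M \<pi> f g \<sigma> \<theta> (Suc t) i) \<le> (\<Sum>i\<in>M. alive M \<pi> f g \<sigma> \<theta> t i)"
  unfolding alive_mass[OF P V]
  by (intro sum_mono mult_left_le) (use alive_nonneg[OF P V S] stopP_bounds[OF S] in auto)

lemma mass_mono: "t \<le> t' \<Longrightarrow> (\<Sum>i\<in>M. alive M \<pi> f g \<sigma> \<theta> t' i) \<le> (\<Sum>i\<in>M. alive M \<pi> f g \<sigma> \<theta> t i)"
  by (induction t' rule: dec_induct) (use mass_decr order_trans in blast)+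

lemma absorption:
  assumes reach: "\<forall>i\<in>M. \<exists>j. (i,j) \<in> (edges M f)\<^sup>* \<and> 0 < stopP f \<sigma> \<theta> j"
  shows "(\<lambda>T. \<Sum>i\<in>M. alive M \<pi> f g \<sigma> \<theta> T i) \<longlonglongrightarrow> 0"
proof -
  let ?N = "\<lambda>T. \<Sum>i\<in>M. alive M \<pi> f g \<sigma> \<theta> T i"
  have fin: "finite M" using P by (simp add: is_protocol_def)
  have "\<forall>i\<in>M. \<exists>n. rr M \<pi> f \<sigma> \<theta> n i < 1"
    using reach rr_exit by blast
  then obtain nn where nn: "\<forall>i\<in>M. rr M \<pi> f \<sigma> \<theta> (nn i) i < 1" by metis
  define K where "K = Suc (\<Sum>i\<in>M. nn i)"
  have K1: "\<forall>i\<in>M. rr M \<pi> f \<sigma> \<theta> K i < 1"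
  proof
    fix i assume i: "i \<in> M"
    have "nn i \<le> (\<Sum>i\<in>M. nn i)" using fin i by (intro member_le_sum) auto
    then obtain d where "K = nn i + d" unfolding K_def by (metis le_SucI le_iff_add)
    moreover have "rr M \<pi> f \<sigma> \<theta> (nn i + d) i < 1" using rr_mono[OF i, of "nn i" d] nn i
      by (meson order_le_less_trans)
    ultimately show "rr M \<pi> f \<sigma> \<theta> K i < 1" by simp
  qed
  show ?thesis
  proof (cases "M = {}")
    case True
    then show ?thesis by simp
  next
    case False
    define c where "c = Max ((\<lambda>i. rr M \<pi> f \<sigma> \<theta> K i) ` M)"
    have c1: "c < 1" unfolding c_def using K1 fin False by (subst Max_less_iff) auto
    obtain i0 where i0: "i0 \<in> M" using False by blast
    have "rr M \<pi> f \<sigma> \<theta> K i0 \<le> c" unfolding c_def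
      by (rule Max_ge[OF finite_imageI[OF fin] imageI[OF i0]])
    then have c0: "0 \<le> c" using rr_bounds[OF i0, of K] by linarith
    have step: "?N (t + K) \<le> c * ?N t" for t
    proof -
      have "?N (t + K) = (\<Sum>i\<in>M. alive M \<pi> f g \<sigma> \<theta> t i * rr M \<pi> f \<sigma> \<theta> K i)" by (rule alive_rr)
      also have "\<dots> \<le> (\<Sum>i\<in>M. alive M \<pi> f g \<sigma> \<theta> t i * c)"
        unfolding c_def using fin alive_nonneg[OF P V S]
        by (intro sum_mono mult_left_mono) auto
      also have "(\<Sum>i\<in>M. alive M \<pi> f g \<sigma> \<theta> t i * c) = c * ?N t"
        by (simp add: sum_distrib_left mult.commute)
      finally show ?thesis .
    qed
    have pow: "?N (n * K) \<le> c ^ n" for n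
    proof (induction n)
      case 0
      then show ?case using g_sum[OF P] by simp
    next
      case (Suc n)
      have "?N (Suc n * K) = ?N (n * K + K)" by (simp add: add.commute)
      also have "\<dots> \<le> c * ?N (n * K)" by (rule step)
      also have "\<dots> \<le> c * c ^ n" using Suc c0 by (simp add: mult_left_mono)
      finally show ?case by simp
    qed
    show ?thesis
    proof (rule LIMSEQ_I)
      fix r :: real assume r: "0 < r"
      obtain n where n: "c ^ n < r" using real_arch_pow_inv[OF r c1] by blast
      show "\<exists>no. \<forall>T\<ge>no. norm (?N T - 0) < r"
      proof (intro exI allI impI)
        fix T assume "n * K \<le> T"
        then have "?N T \<le> ?N (n * K)" by (rule mass_mono)
        then show "norm (?N T - 0) < r" using pow[of n] n mass_nonneg[of T] by simp
      qed
    qed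
  qed
qed

end



lemma trancl_split_first:
  assumes "(i,x) \<in> E\<^sup>+"
  shows "\<exists>j1. (i,j1) \<in> E \<and> (j1,x) \<in> (E \<inter> {(y,z). y \<noteq> i})\<^sup>*"
  using assms
proof (induction rule: trancl_induct)
  case (base y)
  then show ?case by blast
next
  case (step y z)
  then obtain j1 where j1: "(i,j1) \<in> E" "(j1,y) \<in> (E \<inter> {(y,z). y \<noteq> i})\<^sup>*" by blast
  show ?case
  proof (cases "y = i")
    case True
    then show ?thesis using step(2) by blast
  next
    case False
    then have "(y,z) \<in> E \<inter> {(y,z). y \<noteq> i}" using step(2) by blast
    then show ?thesis using j1 by (meson rtrancl.rtrancl_into_rtrancl)
  qed
qed

context
  fixes M and \<pi> :: "theta \<Rightarrow> 's::finite \<Rightarrow> real" and f :: "nat \<Rightarrow> 's \<Rightarrow> nat \<Rightarrow> real"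
    and g :: "nat \<Rightarrow> real" and a :: "nat \<Rightarrow> real" and \<theta> :: theta and i :: nat
  assumes P: "is_protocol M f g a" and V: "valid_signals \<pi>" and iM: "i \<in> M"
begin

lemma taboo_nonneg: "j \<in> M \<Longrightarrow> 0 \<le> taboo M \<pi> f \<theta> i n j"
proof (induction n arbitrary: j)
  case 0
  then show ?case using Ptrans_nonneg[OF P V iM] by simp
next
  case (Suc n)
  show ?case
    by (simp, intro sum_nonneg mult_nonneg_nonneg) (use Suc Ptrans_nonneg[OF P V] in auto)
qed

lemma taboo_mass_Suc: "(\<Sum>j\<in>M. taboo M \<pi> f \<theta> i (Suc n) j) = (\<Sum>j\<in>M. taboo M \<pi> f \<theta> i n j) - taboo M \<pi> f \<theta> i n i"
proof -
  have fin: "finite M" using P by (simp add: is_protocol_def)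
  have "(\<Sum>j\<in>M. taboo M \<pi> f \<theta> i (Suc n) j) = (\<Sum>j\<in>M. \<Sum>k\<in>M - {i}. taboo M \<pi> f \<theta> i n k * Ptrans \<pi> f \<theta> k j)"
    by simp
  also have "\<dots> = (\<Sum>k\<in>M - {i}. \<Sum>j\<in>M. taboo M \<pi> f \<theta> i n k * Ptrans \<pi> f \<theta> k j)"
    by (rule sum.swap)
  also have "\<dots> = (\<Sum>k\<in>M - {i}. taboo M \<pi> f \<theta> i n k)"
    by (rule sum.cong) (auto simp: sum_distrib_left[symmetric] Ptrans_sum[OF P V])
  also have "\<dots> = (\<Sum>j\<in>M. taboo M \<pi> f \<theta> i n j) - taboo M \<pi> f \<theta> i n i"
    using fin iM by (simp add: sum_diff1)
  finally show ?thesis .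
qed

lemma taboo_partial: "(\<Sum>n<N. taboo M \<pi> f \<theta> i n i) = 1 - (\<Sum>j\<in>M. taboo M \<pi> f \<theta> i N j)"
proof (induction N)
  case 0
  then show ?case using Ptrans_sum[OF P V iM] by simp
next
  case (Suc N)
  then show ?case using taboo_mass_Suc[of N] by simp
qed

lemma taboo_absorbing_mono:
  assumes k: "k \<in> M" "k \<noteq> i" "absorbing f k"
  shows "taboo M \<pi> f \<theta> i n k \<le> taboo M \<pi> f \<theta> i (Suc n) k"
proof -
  have fin: "finite M" using P by (simp add: is_protocol_def)
  have "Ptrans \<pi> f \<theta> k k = 1"
    using k(3) V unfolding Ptrans_def absorbing_def valid_signals_def by simp
  then have "taboo M \<pi> f \<theta> i n k = taboo M \<pi> f \<theta> i n k * Ptrans \<pi> f \<theta> k k" by simp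
  also have "\<dots> \<le> (\<Sum>k'\<in>M - {i}. taboo M \<pi> f \<theta> i n k' * Ptrans \<pi> f \<theta> k' k)"
    by (rule member_le_sum) (use k fin taboo_nonneg Ptrans_nonneg[OF P V] in \<open>auto intro: mult_nonneg_nonneg\<close>)
  finally show ?thesis by simp
qed

lemma taboo_pos:
  assumes "(i,j1) \<in> edges M f" "(j1,x) \<in> (edges M f \<inter> {(y,z). y \<noteq> i})\<^sup>*"
  shows "\<exists>n. 0 < taboo M \<pi> f \<theta> i n x"
  using assms(2)
proof (induction rule: rtrancl_induct)
  case base
  then show ?case using edge_Ptrans_pos[OF P V assms(1)] by (intro exI[of _ 0]) simp
next
  case (step y z)
  obtain n where n: "0 < taboo M \<pi> f \<theta> i n y" using step by blast
  have yz: "(y,z) \<in> edges M f" "y \<noteq> i" using step(2) by auto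
  have yM: "y \<in> M" "z \<in> M" using yz edges_M by blast+
  have fin: "finite M" using P by (simp add: is_protocol_def)
  have "0 < taboo M \<pi> f \<theta> i n y * Ptrans \<pi> f \<theta> y z"
    using n edge_Ptrans_pos[OF P V yz(1)] by simp
  also have "\<dots> \<le> (\<Sum>k'\<in>M - {i}. taboo M \<pi> f \<theta> i n k' * Ptrans \<pi> f \<theta> k' z)"
    by (rule member_le_sum) (use yz yM fin taboo_nonneg Ptrans_nonneg[OF P V] in \<open>auto intro: mult_nonneg_nonneg\<close>)
  finally show ?case by (intro exI[of _ "Suc n"]) simp
qed

lemma transient_if_reach:
  assumes k: "k \<in> M" "k \<noteq> i" "absorbing f k" and r: "(i,k) \<in> (edges M f)\<^sup>*"
  shows "transient M \<pi> f \<theta> i"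
proof -
  have fin: "finite M" using P by (simp add: is_protocol_def)
  have "i = k \<or> i \<noteq> k \<and> (i,k) \<in> (edges M f)\<^sup>+" by (rule rtranclD[OF r])
  then have "(i,k) \<in> (edges M f)\<^sup>+"
  proof (elim disjE conjE)
    assume "i = k" then show ?thesis using k(2) by simp
  qed
  from trancl_split_first[OF this] obtain j1 where j1: "(i,j1) \<in> edges M f" "(j1,k) \<in> (edges M f \<inter> {(y,z). y \<noteq> i})\<^sup>*"
    by (elim exE conjE)
  from taboo_pos[OF j1] obtain n0 where n0: "0 < taboo M \<pi> f \<theta> i n0 k" by (elim exE)
  define c where "c = taboo M \<pi> f \<theta> i n0 k"
  have mono: "c \<le> taboo M \<pi> f \<theta> i (n0 + d) k" for d
  proof (induction d)
    case 0 then show ?case by (simp add: c_def)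
  next
    case (Suc d) then show ?case using taboo_absorbing_mono[OF k, of "n0 + d"] by simp
  qed
  have bound_big: "(\<Sum>n<n0 + d. taboo M \<pi> f \<theta> i n i) \<le> 1 - c" for d
  proof -
    have "taboo M \<pi> f \<theta> i (n0 + d) k \<le> (\<Sum>j\<in>M. taboo M \<pi> f \<theta> i (n0 + d) j)"
      by (rule member_le_sum) (use k fin taboo_nonneg in auto)
    then show ?thesis using taboo_partial[of "n0 + d"] mono[of d] by simp
  qed
  have nn: "0 \<le> taboo M \<pi> f \<theta> i n i" for n using taboo_nonneg[OF iM] .
  have bound: "(\<Sum>n<N. taboo M \<pi> f \<theta> i n i) \<le> 1 - c" for N
  proof -
    have "(\<Sum>n<N. taboo M \<pi> f \<theta> i n i) \<le> (\<Sum>n<n0 + N. taboo M \<pi> f \<theta> i n i)"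
      by (rule sum_mono2) (use nn in auto)
    then show ?thesis using bound_big[of N] by linarith
  qed
  have sm: "summable (\<lambda>n. taboo M \<pi> f \<theta> i n i)"
    by (rule summableI_nonneg_bounded[where x="1 - c"]) (use nn bound in auto)
  have "return_prob M \<pi> f \<theta> i \<le> 1 - c"
    unfolding return_prob_def by (rule suminf_le_const[OF sm]) (use bound in auto)
  then show ?thesis unfolding transient_def c_def using n0 by simp
qed

end



definition qv :: "nat set \<Rightarrow> (theta \<Rightarrow> 's::finite \<Rightarrow> real) \<Rightarrow> (nat \<Rightarrow> 's \<Rightarrow> nat \<Rightarrow> real) \<Rightarrow> (nat \<Rightarrow> real)
   \<Rightarrow> (nat \<Rightarrow> theta \<Rightarrow> real) \<Rightarrow> theta \<Rightarrow> (nat \<Rightarrow> real) \<Rightarrow> real" where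
  "qv M \<pi> f g \<sigma> \<theta> a = (\<Sum>i\<in>M. endprob M \<pi> f g \<sigma> \<theta> i * a i)"

lemma qv_sums:
  assumes "is_protocol M f g a" "valid_signals \<pi>" "valid_strategy M \<sigma>"
  shows "(\<lambda>t. \<Sum>i\<in>M. alive M \<pi> f g \<sigma> \<theta> t i * stopP f \<sigma> \<theta> i * b i) sums qv M \<pi> f g \<sigma> \<theta> b"
  unfolding qv_def endprob_def
  by (rule sums_sum, rule sums_mult2, rule summable_sums, rule endterm_summable[OF assms]) simp

lemma Ptrans_edge:
  assumes "is_protocol M f g a" "valid_signals \<pi>" "i \<in> M" "j \<in> M" "Ptrans \<pi> f \<theta> i j \<noteq> 0"
  shows "(i,j) \<in> edges M f"
  using assms Ptrans_nonneg[OF assms(1-4), where \<theta>=\<theta>] Ptrans_pos_iff[OF assms(1-4), where \<theta>=\<theta>]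
  by (auto simp: edges_def)

context
  fixes M and \<pi> :: "theta \<Rightarrow> 's::finite \<Rightarrow> real" and f :: "nat \<Rightarrow> 's \<Rightarrow> nat \<Rightarrow> real"
    and g :: "nat \<Rightarrow> real" and a :: "nat \<Rightarrow> real" and \<sigma> :: "nat \<Rightarrow> theta \<Rightarrow> real" and \<theta> :: theta and i0 :: nat
  assumes P: "is_protocol M f g a" and V: "valid_signals \<pi>" and S: "valid_strategy M \<sigma>" and i0M: "i0 \<in> M"
    and LM: "\<forall>j. (i0,j) \<in> (edges M f)\<^sup>* \<longrightarrow> a j \<le> a i0"
begin

definition "sig1D = (\<lambda>i th. if i = i0 then 1 else \<sigma> i th)"

lemma S1: "valid_strategy M sig1D"
  using S unfolding valid_strategy_def sig1D_def by auto

abbreviation "xD t j \<equiv> alive M \<pi> f g \<sigma> \<theta> t j"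
abbreviation "yD t j \<equiv> alive M \<pi> f g sig1D \<theta> t j"
abbreviation "sD j \<equiv> stopP f \<sigma> \<theta> j"
abbreviation "s1D j \<equiv> stopP f sig1D \<theta> j"
abbreviation "RD \<equiv> (edges M f)\<^sup>*"

lemma x_nn: "j \<in> M \<Longrightarrow> 0 \<le> xD t j" by (rule alive_nonneg[OF P V S])
lemma s_b: "j \<in> M \<Longrightarrow> 0 \<le> sD j \<and> sD j \<le> 1" using stopP_bounds[OF S, where f=f and \<theta>=\<theta>] by blast

definition "DDD t i = xD t i * (1 - sD i) - yD t i * (1 - s1D i)"

lemma s1_eq: "i \<noteq> i0 \<Longrightarrow> s1D i = sD i" "s1D i0 = 1"
  unfolding stopP_def sig1D_def by auto

lemma DD_ne: "i \<noteq> i0 \<Longrightarrow> DDD t i = (xD t i - yD t i) * (1 - sD i)"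
  unfolding DDD_def using s1_eq by (simp add: algebra_simps)

lemma DD_i0: "DDD t i0 = xD t i0 * (1 - sD i0)"
  unfolding DDD_def using s1_eq by simp

lemma delta_Suc: "xD (Suc t) j - yD (Suc t) j = (\<Sum>i\<in>M. DDD t i * Ptrans \<pi> f \<theta> i j)"
  unfolding DDD_def by (simp add: sum_subtractf[symmetric] algebra_simps)

lemma delta_props: "j \<in> M \<Longrightarrow> 0 \<le> xD t j - yD t j \<and> ((i0,j) \<notin> RD \<longrightarrow> xD t j - yD t j = 0)"
proof (induction t arbitrary: j)
  case 0
  then show ?case by simp
next
  case (Suc t)
  have DDnn: "0 \<le> DDD t i" if "i \<in> M" for i
  proof (cases "i = i0")
    case True
    then show ?thesis using DD_i0 x_nn[OF that, of t] s_b[OF that] by simp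
  next
    case False
    then show ?thesis using DD_ne Suc.IH[OF that] s_b[OF that] by simp
  qed
  have DD0: "DDD t i = 0" if "i \<in> M" "(i0,i) \<notin> RD" for i
  proof -
    have "i \<noteq> i0" using that by auto
    then show ?thesis using DD_ne Suc.IH[OF that(1)] that(2) by simp
  qed
  have nn: "0 \<le> xD (Suc t) j - yD (Suc t) j"
    unfolding delta_Suc by (intro sum_nonneg mult_nonneg_nonneg) (use DDnn Ptrans_nonneg[OF P V _ Suc.prems] in auto)
  moreover have "xD (Suc t) j - yD (Suc t) j = 0" if nr: "(i0,j) \<notin> RD"
    unfolding delta_Suc
  proof (rule sum.neutral, rule ballI)
    fix i assume i: "i \<in> M"
    show "DDD t i * Ptrans \<pi> f \<theta> i j = 0"
    proof (cases "(i0,i) \<in> RD")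
      case True
      have "Ptrans \<pi> f \<theta> i j = 0"
      proof (rule ccontr)
        assume "Ptrans \<pi> f \<theta> i j \<noteq> 0"
        then have "(i,j) \<in> edges M f" by (rule Ptrans_edge[OF P V i Suc.prems])
        then have "(i0,j) \<in> RD" by (rule rtrancl_into_rtrancl[OF True])
        then show False using nr by contradiction
      qed
      then show ?thesis by simp
    next
      case False
      then show ?thesis using DD0[OF i] by simp
    qed
  qed
  ultimately show ?case by blast
qed

lemma DD_nonneg: "i \<in> M \<Longrightarrow> 0 \<le> DDD t i"
proof (cases "i = i0")
  case True
  assume i: "i \<in> M"
  then show ?thesis using True DD_i0 x_nn[OF i, of t] s_b[OF i] by simp
next
  case False
  assume i: "i \<in> M"
  then show ?thesis using False DD_ne delta_props[OF i] s_b[OF i] by simp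
qed

lemma delta_mass: "(\<Sum>j\<in>M. xD (Suc t) j - yD (Suc t) j) = (\<Sum>i\<in>M. DDD t i)"
proof -
  have "(\<Sum>j\<in>M. xD (Suc t) j - yD (Suc t) j) = (\<Sum>j\<in>M. \<Sum>i\<in>M. DDD t i * Ptrans \<pi> f \<theta> i j)"
    by (simp only: delta_Suc)
  also have "\<dots> = (\<Sum>i\<in>M. \<Sum>j\<in>M. DDD t i * Ptrans \<pi> f \<theta> i j)" by (rule sum.swap)
  also have "\<dots> = (\<Sum>i\<in>M. DDD t i)"
    by (rule sum.cong) (auto simp: sum_distrib_left[symmetric] Ptrans_sum[OF P V])
  finally show ?thesis .
qed

lemma a0_nonneg: "0 \<le> a i0" using P i0M by (simp add: is_protocol_def)

lemma per_time:
  "(\<Sum>i\<in>M. xD t i * sD i * a i) - (\<Sum>i\<in>M. yD t i * s1D i * a i)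
     \<le> a i0 * ((\<Sum>i\<in>M. xD t i - yD t i) - (\<Sum>i\<in>M. DDD t i))"
proof -
  have "(\<Sum>i\<in>M. xD t i * sD i * a i) - (\<Sum>i\<in>M. yD t i * s1D i * a i) = (\<Sum>i\<in>M. xD t i * sD i * a i - yD t i * s1D i * a i)"
    by (simp add: sum_subtractf)
  also have "\<dots> \<le> (\<Sum>i\<in>M. a i0 * ((xD t i - yD t i) - DDD t i))"
  proof (rule sum_mono)
    fix i assume i: "i \<in> M"
    show "xD t i * sD i * a i - yD t i * s1D i * a i \<le> a i0 * ((xD t i - yD t i) - DDD t i)"
    proof (cases "i = i0")
      case True
      have "xD t i0 * sD i0 * a i0 - yD t i0 * s1D i0 * a i0 = a i0 * ((xD t i0 - yD t i0) - DDD t i0)"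
        unfolding DD_i0 s1_eq(2) by (simp add: algebra_simps)
      then show ?thesis using True by simp
    next
      case False
      have e: "xD t i * sD i * a i - yD t i * s1D i * a i = (xD t i - yD t i) * sD i * a i"
        using s1_eq(1)[OF False] by (simp add: algebra_simps)
      have e2: "(xD t i - yD t i) - DDD t i = (xD t i - yD t i) * sD i"
        using DD_ne[OF False] by (simp add: algebra_simps)
      have d: "0 \<le> xD t i - yD t i" using delta_props[OF i] by blast
      have sp: "0 \<le> sD i" using s_b[OF i] by simp
      have le: "(xD t i - yD t i) * sD i * a i \<le> (xD t i - yD t i) * sD i * a i0"
      proof (cases "(i0,i) \<in> RD")
        case True
        then have "a i \<le> a i0" using LM by blast
        then show ?thesis using d sp by (simp add: mult_left_mono)
      next
        case False
        then show ?thesis using delta_props[OF i] by simp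
      qed
      have e3: "a i0 * ((xD t i - yD t i) - DDD t i) = (xD t i - yD t i) * sD i * a i0" using e2 by simp
      show ?thesis unfolding e e3 by (rule le)
    qed
  qed
  also have "\<dots> = a i0 * ((\<Sum>i\<in>M. xD t i - yD t i) - (\<Sum>i\<in>M. DDD t i))"
    by (simp add: sum_distrib_left[symmetric] sum_subtractf)
  finally show ?thesis .
qed

lemma partial_le:
  "(\<Sum>t<T. \<Sum>i\<in>M. xD t i * sD i * a i) - (\<Sum>t<T. \<Sum>i\<in>M. yD t i * s1D i * a i)
     \<le> - a i0 * (\<Sum>i\<in>M. xD T i - yD T i)"
proof (induction T)
  case 0
  then show ?case by simp
next
  case (Suc T)
  have "(\<Sum>t<Suc T. \<Sum>i\<in>M. xD t i * sD i * a i) - (\<Sum>t<Suc T. \<Sum>i\<in>M. yD t i * s1D i * a i)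
      = ((\<Sum>t<T. \<Sum>i\<in>M. xD t i * sD i * a i) - (\<Sum>t<T. \<Sum>i\<in>M. yD t i * s1D i * a i))
        + ((\<Sum>i\<in>M. xD T i * sD i * a i) - (\<Sum>i\<in>M. yD T i * s1D i * a i))" by simp
  also have "\<dots> \<le> - a i0 * (\<Sum>i\<in>M. xD T i - yD T i) + a i0 * ((\<Sum>i\<in>M. xD T i - yD T i) - (\<Sum>i\<in>M. DDD T i))"
    using Suc.IH per_time[of T] by linarith
  also have "\<dots> = - a i0 * (\<Sum>i\<in>M. xD (Suc T) i - yD (Suc T) i)"
    using delta_mass[of T] by (simp add: algebra_simps)
  finally show ?case .
qed

lemma terminalize_one0: "qv M \<pi> f g \<sigma> \<theta> a \<le> qv M \<pi> f g sig1D \<theta> a"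
proof -
  have le: "(\<Sum>t<T. \<Sum>i\<in>M. xD t i * sD i * a i) \<le> (\<Sum>t<T. \<Sum>i\<in>M. yD t i * s1D i * a i)" for T
  proof -
    have "0 \<le> (\<Sum>i\<in>M. xD T i - yD T i)" by (rule sum_nonneg) (use delta_props in blast)
    then have "- a i0 * (\<Sum>i\<in>M. xD T i - yD T i) \<le> 0" using a0_nonneg by (simp add: mult_nonneg_nonneg)
    then show ?thesis using partial_le[of T] by linarith
  qed
  have l1: "(\<lambda>T. \<Sum>t<T. \<Sum>i\<in>M. xD t i * sD i * a i) \<longlonglongrightarrow> qv M \<pi> f g \<sigma> \<theta> a"
    using qv_sums[OF P V S, of \<theta> a] by (simp add: sums_def)
  have l2: "(\<lambda>T. \<Sum>t<T. \<Sum>i\<in>M. yD t i * s1D i * a i) \<longlonglongrightarrow> qv M \<pi> f g sig1D \<theta> a"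
    using qv_sums[OF P V S1, of \<theta> a] by (simp add: sums_def)
  show ?thesis by (rule LIMSEQ_le[OF l1 l2]) (use le in auto)
qed

lemma terminalize_one: "qv M \<pi> f g \<sigma> \<theta> a \<le> qv M \<pi> f g (\<lambda>i th. if i = i0 then 1 else \<sigma> i th) \<theta> a"
  using terminalize_one0 unfolding sig1D_def .

end

lemma terminalize_one':
  assumes "is_protocol M f g a" "valid_signals \<pi>" "valid_strategy M \<sigma>" "i0 \<in> M"
    "\<forall>j. (i0,j) \<in> (edges M f)\<^sup>* \<longrightarrow> a j \<le> a i0"
  shows "qv M \<pi> f g \<sigma> \<theta> a \<le> qv M \<pi> f g (\<lambda>i th. if i = i0 then 1 else \<sigma> i th) \<theta> a"
  by (rule terminalize_one[OF assms])

lemma terminalize_set: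
  assumes P: "is_protocol M f g a" and V: "valid_signals \<pi>" and S: "valid_strategy M \<sigma>"
    and F: "finite F" "F \<subseteq> M" "\<forall>i0\<in>F. \<forall>j. (i0,j) \<in> (edges M f)\<^sup>* \<longrightarrow> a j \<le> a i0"
  shows "qv M \<pi> f g \<sigma> \<theta> a \<le> qv M \<pi> f g (\<lambda>i th. if i \<in> F then 1 else \<sigma> i th) \<theta> a"
  using F
proof (induction F rule: finite_induct)
  case empty
  then show ?case by simp
next
  case (insert x F)
  let ?sF = "\<lambda>i th. if i \<in> F then 1 else \<sigma> i th"
  have SF: "valid_strategy M ?sF" using S unfolding valid_strategy_def by auto
  have "qv M \<pi> f g \<sigma> \<theta> a \<le> qv M \<pi> f g ?sF \<theta> a" using insert by auto
  also have "\<dots> \<le> qv M \<pi> f g (\<lambda>i th. if i = x then 1 else ?sF i th) \<theta> a"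
    by (rule terminalize_one'[OF P V SF]) (use insert in auto)
  also have "(\<lambda>i th. if i = x then 1 else ?sF i th) = (\<lambda>i th. if i \<in> insert x F then 1 else \<sigma> i th)"
    by (auto simp: fun_eq_iff)
  finally show ?case .
qed



definition newf :: "(nat \<Rightarrow> 's \<Rightarrow> nat \<Rightarrow> real) \<Rightarrow> (nat \<Rightarrow> real) \<Rightarrow> (nat \<Rightarrow> real) \<Rightarrow> nat \<Rightarrow> nat \<Rightarrow> nat \<Rightarrow> 's \<Rightarrow> nat \<Rightarrow> real" where
  "newf f a e k1 k2 i s j =
    (if i = k1 \<or> i = k2 then (if j = i then 1 else 0)
     else if j = k1 then e i * a i + (1 - e i) * (f i s k1 * a k1 + f i s k2 * a k2)
     else if j = k2 then e i * (1 - a i) + (1 - e i) * (f i s k1 * (1 - a k1) + f i s k2 * (1 - a k2))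
     else (1 - e i) * f i s j)"

definition newg :: "(nat \<Rightarrow> real) \<Rightarrow> (nat \<Rightarrow> real) \<Rightarrow> nat \<Rightarrow> nat \<Rightarrow> nat \<Rightarrow> real" where
  "newg g a k1 k2 j =
    (if j = k1 then g k1 * a k1 + g k2 * a k2
     else if j = k2 then g k1 * (1 - a k1) + g k2 * (1 - a k2) else g j)"

definition newa :: "nat \<Rightarrow> nat \<Rightarrow> real" where
  "newa k1 j = (if j = k1 then 1 else 0)"

lemma sum_split_K:
  assumes "finite M" "k1 \<in> M" "k2 \<in> M" "k1 \<noteq> k2"
  shows "(\<Sum>j\<in>M. h j) = h k1 + h k2 + (\<Sum>j\<in>M - {k1, k2}. h j)"
proof -
  have "(\<Sum>j\<in>M. h j) = h k1 + (\<Sum>j\<in>M - {k1}. h j)" using assms by (simp add: sum.remove)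
  also have "(\<Sum>j\<in>M - {k1}. h j) = h k2 + (\<Sum>j\<in>M - {k1} - {k2}. h j)"
    using assms by (subst sum.remove[of _ k2]) auto
  also have "M - {k1} - {k2} = M - {k1, k2}" by auto
  finally show ?thesis by (simp add: add.assoc)
qed

context
  fixes M and \<pi> :: "theta \<Rightarrow> 's::finite \<Rightarrow> real" and f :: "nat \<Rightarrow> 's \<Rightarrow> nat \<Rightarrow> real"
    and g :: "nat \<Rightarrow> real" and a :: "nat \<Rightarrow> real" and e :: "nat \<Rightarrow> real" and k1 k2 :: nat
  assumes P: "is_protocol M f g a" and V: "valid_signals \<pi>"
    and K: "k1 \<in> M" "k2 \<in> M" "k1 \<noteq> k2"
    and E01: "\<forall>i\<in>M. 0 \<le> e i \<and> e i \<le> 1"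
    and EK: "e k1 = 1" "e k2 = 1"
begin

abbreviation "fN \<equiv> newf f a e k1 k2"
abbreviation "gN \<equiv> newg g a k1 k2"
abbreviation "aN \<equiv> newa k1"

lemma finM: "finite M" using P by (simp add: is_protocol_def)

lemma f_nn: "i \<in> M \<Longrightarrow> j \<in> M \<Longrightarrow> 0 \<le> f i s j"
  using P unfolding is_protocol_def is_dist_def by blast

lemma a_b: "i \<in> M \<Longrightarrow> 0 \<le> a i \<and> a i \<le> 1"
  using P unfolding is_protocol_def by blast

lemma fN_nn: "i \<in> M \<Longrightarrow> j \<in> M \<Longrightarrow> 0 \<le> fN i s j"
  unfolding newf_def using f_nn a_b E01 K
  by (auto intro!: add_nonneg_nonneg mult_nonneg_nonneg)

lemma fN_sum: "i \<in> M \<Longrightarrow> (\<Sum>j\<in>M. fN i s j) = 1"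
proof -
  assume i: "i \<in> M"
  show ?thesis
  proof (cases "i = k1 \<or> i = k2")
    case True
    then have "(\<Sum>j\<in>M. fN i s j) = (\<Sum>j\<in>M. if j = i then 1 else 0)"
      unfolding newf_def by simp
    also have "\<dots> = 1" using i finM by simp
    finally show ?thesis .
  next
    case False
    have fs: "(\<Sum>j\<in>M. f i s j) = 1" using P i unfolding is_protocol_def is_dist_def by blast
    have "(\<Sum>j\<in>M. fN i s j) = fN i s k1 + fN i s k2 + (\<Sum>j\<in>M - {k1, k2}. fN i s j)"
      by (rule sum_split_K[OF finM K])
    also have "(\<Sum>j\<in>M - {k1, k2}. fN i s j) = (\<Sum>j\<in>M - {k1, k2}. (1 - e i) * f i s j)"
      by (rule sum.cong) (use False in \<open>auto simp: newf_def\<close>)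
    also have "fN i s k1 + fN i s k2 = e i + (1 - e i) * (f i s k1 + f i s k2)"
      using False K by (simp add: newf_def algebra_simps)
    also have "(\<Sum>j\<in>M - {k1, k2}. (1 - e i) * f i s j) = (1 - e i) * ((\<Sum>j\<in>M. f i s j) - f i s k1 - f i s k2)"
      by (simp add: sum_distrib_left[symmetric] sum_split_K[OF finM K])
    finally show ?thesis using fs by (simp add: algebra_simps)
  qed
qed

lemma gN_sum: "(\<Sum>j\<in>M. gN j) = 1"
proof -
  have gs: "(\<Sum>j\<in>M. g j) = 1" using P unfolding is_protocol_def is_dist_def by blast
  have "(\<Sum>j\<in>M. gN j) = gN k1 + gN k2 + (\<Sum>j\<in>M - {k1, k2}. gN j)" by (rule sum_split_K[OF finM K])
  also have "(\<Sum>j\<in>M - {k1, k2}. gN j) = (\<Sum>j\<in>M - {k1, k2}. g j)"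
    by (rule sum.cong) (auto simp: newg_def)
  also have "(\<Sum>j\<in>M - {k1, k2}. g j) = (\<Sum>j\<in>M. g j) - g k1 - g k2"
    by (simp add: sum_split_K[OF finM K])
  finally show ?thesis using gs K by (simp add: newg_def algebra_simps)
qed

lemma gN_nn: "j \<in> M \<Longrightarrow> 0 \<le> gN j"
  using P K a_b unfolding newg_def is_protocol_def is_dist_def
  by (auto intro!: add_nonneg_nonneg mult_nonneg_nonneg)

lemma newprot: "is_protocol M fN gN aN"
  unfolding is_protocol_def is_dist_def
  using finM fN_nn fN_sum gN_nn gN_sum by (auto simp: newa_def)

lemma Pt_nonK: "i \<in> M - {k1,k2} \<Longrightarrow> j \<in> M - {k1,k2} \<Longrightarrow> Ptrans \<pi> fN \<theta> i j = (1 - e i) * Ptrans \<pi> f \<theta> i j"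
  unfolding Ptrans_def newf_def by (auto simp: sum_distrib_left algebra_simps)

lemma pi_sum: "(\<Sum>s\<in>UNIV. \<pi> \<theta> s) = 1" using V unfolding valid_signals_def by blast

lemma Pt_k1: "i \<in> M - {k1,k2} \<Longrightarrow> Ptrans \<pi> fN \<theta> i k1 =
   e i * a i + (1 - e i) * (Ptrans \<pi> f \<theta> i k1 * a k1 + Ptrans \<pi> f \<theta> i k2 * a k2)"
proof -
  assume i: "i \<in> M - {k1,k2}"
  have "Ptrans \<pi> fN \<theta> i k1 = (\<Sum>s\<in>UNIV. (e i * a i) * \<pi> \<theta> s + ((1 - e i) * a k1) * (\<pi> \<theta> s * f i s k1) + ((1 - e i) * a k2) * (\<pi> \<theta> s * f i s k2))"
    unfolding Ptrans_def newf_def using i K by (intro sum.cong) (auto simp: algebra_simps)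
  also have "\<dots> = (e i * a i) * (\<Sum>s\<in>UNIV. \<pi> \<theta> s) + ((1 - e i) * a k1) * Ptrans \<pi> f \<theta> i k1 + ((1 - e i) * a k2) * Ptrans \<pi> f \<theta> i k2"
    unfolding Ptrans_def by (simp only: sum.distrib sum_distrib_left[symmetric])
  finally show ?thesis using pi_sum by (simp add: algebra_simps)
qed

lemma Pt_k2: "i \<in> M - {k1,k2} \<Longrightarrow> Ptrans \<pi> fN \<theta> i k2 =
   e i * (1 - a i) + (1 - e i) * (Ptrans \<pi> f \<theta> i k1 * (1 - a k1) + Ptrans \<pi> f \<theta> i k2 * (1 - a k2))"
proof -
  assume i: "i \<in> M - {k1,k2}"
  have "Ptrans \<pi> fN \<theta> i k2 = (\<Sum>s\<in>UNIV. (e i * (1 - a i)) * \<pi> \<theta> s + ((1 - e i) * (1 - a k1)) * (\<pi> \<theta> s * f i s k1) + ((1 - e i) * (1 - a k2)) * (\<pi> \<theta> s * f i s k2))"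
    unfolding Ptrans_def newf_def using i K by (intro sum.cong) (auto simp: algebra_simps)
  also have "\<dots> = (e i * (1 - a i)) * (\<Sum>s\<in>UNIV. \<pi> \<theta> s) + ((1 - e i) * (1 - a k1)) * Ptrans \<pi> f \<theta> i k1 + ((1 - e i) * (1 - a k2)) * Ptrans \<pi> f \<theta> i k2"
    unfolding Ptrans_def by (simp only: sum.distrib sum_distrib_left[symmetric])
  finally show ?thesis using pi_sum by (simp add: algebra_simps)
qed

lemma absorbing_K: "absorbing fN k1" "absorbing fN k2"
  unfolding absorbing_def newf_def by auto

end



lemma absorbing_no_escape:
  assumes P: "is_protocol M f g a" and i: "i \<in> M" and ab: "absorbing f i"
    and r: "(i,k) \<in> (edges M f)\<^sup>*"
  shows "k = i"
  using r
proof (induction rule: rtrancl_induct)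
  case base
  then show ?case by simp
next
  case (step y z)
  have fin: "finite M" using P by (simp add: is_protocol_def)
  obtain s where s: "0 < f y s z" "y \<in> M" "z \<in> M" using step(2) by (auto simp: edges_def)
  have y: "y = i" using step by simp
  show ?case
  proof (rule ccontr)
    assume zi: "z \<noteq> i"
    have sum1: "(\<Sum>j\<in>M. f i s j) = 1" using P i unfolding is_protocol_def is_dist_def by blast
    have nn: "\<forall>j\<in>M. 0 \<le> f i s j" using P i unfolding is_protocol_def is_dist_def by blast
    have "f i s i + f i s z \<le> (\<Sum>j\<in>M. f i s j)"
    proof -
      have "(\<Sum>j\<in>{i,z}. f i s j) \<le> (\<Sum>j\<in>M. f i s j)"
        by (rule sum_mono2[OF fin]) (use i s nn in auto)
      then show ?thesis using zi by simp
    qed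
    moreover have "f i s i = 1" using ab unfolding absorbing_def by blast
    ultimately show False using sum1 s y by simp
  qed
qed

lemma edges_rtrancl_from_edge:
  "(i,j) \<in> E \<Longrightarrow> (j,k) \<in> E\<^sup>* \<Longrightarrow> (i,k) \<in> E\<^sup>*"
  by (rule converse_rtrancl_into_rtrancl)

context
  fixes M and \<pi> :: "theta \<Rightarrow> 's::finite \<Rightarrow> real" and f :: "nat \<Rightarrow> 's \<Rightarrow> nat \<Rightarrow> real"
    and g :: "nat \<Rightarrow> real" and a :: "nat \<Rightarrow> real" and e :: "nat \<Rightarrow> real" and k1 k2 :: nat
  assumes P: "is_protocol M f g a" and V: "valid_signals \<pi>"
    and K: "k1 \<in> M" "k2 \<in> M" "k1 \<noteq> k2"
    and E01: "\<forall>i\<in>M. 0 \<le> e i \<and> e i \<le> 1"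
    and EK: "e k1 = 1" "e k2 = 1"
begin

lemma fN_K_sum: "i \<in> M - {k1,k2} \<Longrightarrow> newf f a e k1 k2 i s k1 + newf f a e k1 k2 i s k2 = e i + (1 - e i) * (f i s k1 + f i s k2)"
  using K by (simp add: newf_def algebra_simps)

lemma toK:
  assumes i: "i \<in> M - {k1,k2}" and pos: "0 < newf f a e k1 k2 i s k1 + newf f a e k1 k2 i s k2"
  shows "\<exists>k\<in>{k1,k2}. (i,k) \<in> (edges M (newf f a e k1 k2))\<^sup>*"
proof -
  have n1: "0 \<le> newf f a e k1 k2 i s k1" and n2: "0 \<le> newf f a e k1 k2 i s k2"
    using fN_nn[OF P V K E01 EK] i K by auto
  show ?thesis
  proof (cases "0 < newf f a e k1 k2 i s k1")
    case True
    then have "(i,k1) \<in> edges M (newf f a e k1 k2)" using i K by (auto simp: edges_def)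
    then show ?thesis by blast
  next
    case False
    then have "0 < newf f a e k1 k2 i s k2" using pos n1 n2 by linarith
    then have "(i,k2) \<in> edges M (newf f a e k1 k2)" using i K by (auto simp: edges_def)
    then show ?thesis by blast
  qed
qed

lemma reach_new:
  assumes r: "(i,j) \<in> (edges M f)\<^sup>*" and ej: "0 < e j" and i: "i \<in> M"
  shows "\<exists>k\<in>{k1,k2}. (i,k) \<in> (edges M (newf f a e k1 k2))\<^sup>*"
  using r ej i
proof (induction rule: converse_rtrancl_induct)
  case base
  show ?case
  proof (cases "j \<in> {k1,k2}")
    case True
    then show ?thesis by blast
  next
    case False
    have "0 \<le> f j undefined k1" "0 \<le> f j undefined k2"
      using f_nn[OF P V K E01 EK] base K by auto
    moreover have "e j \<le> 1" using E01 base by auto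
    ultimately have "0 < newf f a e k1 k2 j undefined k1 + newf f a e k1 k2 j undefined k2"
      using fN_K_sum[of j undefined] False base by (simp add: add_pos_nonneg mult_nonneg_nonneg)
    then show ?thesis using toK[of j undefined] False base by blast
  qed
next
  case (step y z)
  have yM: "y \<in> M" and zM: "z \<in> M" using step(1) by (auto simp: edges_def)
  obtain s where s: "0 < f y s z" using step(1) by (auto simp: edges_def)
  have IH: "\<exists>k\<in>{k1,k2}. (z,k) \<in> (edges M (newf f a e k1 k2))\<^sup>*" using step zM by blast
  show ?case
  proof (cases "y \<in> {k1,k2}")
    case True
    then show ?thesis by blast
  next
    case yK: False
    have ey: "0 \<le> e y" "e y \<le> 1" using E01 yM by auto
    have fy: "0 \<le> f y s k1" "0 \<le> f y s k2" using f_nn[OF P V K E01 EK] yM K by auto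
    show ?thesis
    proof (cases "0 < e y")
      case True
      then have "0 < newf f a e k1 k2 y s k1 + newf f a e k1 k2 y s k2"
        using fN_K_sum[of y s] yK yM ey fy by (simp add: add_pos_nonneg mult_nonneg_nonneg)
      then show ?thesis using toK[of y s] yK yM by blast
    next
      case False
      then have e0: "e y = 0" using ey by simp
      show ?thesis
      proof (cases "z \<in> {k1,k2}")
        case True
        have "f y s z \<le> f y s k1 + f y s k2" using True fy by auto
        then have "0 < newf f a e k1 k2 y s k1 + newf f a e k1 k2 y s k2"
          using fN_K_sum[of y s] yK yM e0 s by simp
        then show ?thesis using toK[of y s] yK yM by blast
      next
        case zK: False
        have "newf f a e k1 k2 y s z = f y s z" using yK zK e0 by (auto simp: newf_def)
        then have "0 < newf f a e k1 k2 y s z" using s by simp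
        then have "(y,z) \<in> edges M (newf f a e k1 k2)" using yM zM unfolding edges_def by blast
        then show ?thesis using IH by (meson converse_rtrancl_into_rtrancl)
      qed
    qed
  qed
qed

lemma reach_new_all:
  assumes "\<forall>i\<in>M. \<exists>j. (i,j) \<in> (edges M f)\<^sup>* \<and> 0 < e j"
  shows "\<forall>i\<in>M. \<exists>k\<in>{k1,k2}. (i,k) \<in> (edges M (newf f a e k1 k2))\<^sup>*"
  using assms reach_new by blast

lemma absorbing_new_iff:
  assumes R: "\<forall>i\<in>M. \<exists>k\<in>{k1,k2}. (i,k) \<in> (edges M (newf f a e k1 k2))\<^sup>*" and i: "i \<in> M"
  shows "absorbing (newf f a e k1 k2) i \<longleftrightarrow> i \<in> {k1,k2}"
proof
  assume ab: "absorbing (newf f a e k1 k2) i"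
  obtain k where k: "k \<in> {k1,k2}" "(i,k) \<in> (edges M (newf f a e k1 k2))\<^sup>*" using R i by blast
  have "k = i" by (rule absorbing_no_escape[OF newprot[OF P V K E01 EK] i ab k(2)])
  then show "i \<in> {k1,k2}" using k by simp
next
  assume "i \<in> {k1,k2}"
  then show "absorbing (newf f a e k1 k2) i" using absorbing_K[OF P V K E01 EK] by auto
qed

end



lemma sum_K0:
  assumes "finite M" "k1 \<in> M" "k2 \<in> M" "k1 \<noteq> k2" "h k1 = 0" "h k2 = 0"
  shows "(\<Sum>j\<in>M. h j) = (\<Sum>j\<in>M - {k1,k2}. h j)"
  using sum_split_K[OF assms(1-4), of h] assms(5,6) by simp

context
  fixes M and \<pi> :: "theta \<Rightarrow> 's::finite \<Rightarrow> real" and f :: "nat \<Rightarrow> 's \<Rightarrow> nat \<Rightarrow> real"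
    and g :: "nat \<Rightarrow> real" and a :: "nat \<Rightarrow> real" and e :: "nat \<Rightarrow> real" and k1 k2 :: nat
    and \<rho> :: "nat \<Rightarrow> theta \<Rightarrow> real" and \<theta> :: theta
  assumes P: "is_protocol M f g a" and V: "valid_signals \<pi>"
    and K: "k1 \<in> M" "k2 \<in> M" "k1 \<noteq> k2"
    and E01: "\<forall>i\<in>M. 0 \<le> e i \<and> e i \<le> 1"
    and EK: "e k1 = 1" "e k2 = 1"
    and S: "valid_strategy M \<rho>" and Eeq: "\<forall>i\<in>M. e i = stopP f \<rho> \<theta> i"
    and R0: "\<forall>i\<in>M. \<exists>j. (i,j) \<in> (edges M f)\<^sup>* \<and> 0 < e j"
begin

abbreviation "xG t j \<equiv> alive M \<pi> f g \<rho> \<theta> t j"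
abbreviation "xNG t j \<equiv> alive M \<pi> (newf f a e k1 k2) (newg g a k1 k2) (\<lambda>_ _. 0) \<theta> t j"

lemma RN: "\<forall>i\<in>M. \<exists>k\<in>{k1,k2}. (i,k) \<in> (edges M (newf f a e k1 k2))\<^sup>*"
  by (rule reach_new_all[OF P V K E01 EK R0])

lemma stopN: "i \<in> M \<Longrightarrow> stopP (newf f a e k1 k2) (\<lambda>_ _. 0) \<theta> i = (if i \<in> {k1,k2} then 1 else 0)"
  unfolding stopP_def using absorbing_new_iff[OF P V K E01 EK RN] by simp

lemma finMG: "finite M" using P by (simp add: is_protocol_def)

lemma stepN: "xNG (Suc t) j = (\<Sum>i\<in>M - {k1,k2}. xNG t i * Ptrans \<pi> (newf f a e k1 k2) \<theta> i j)"
proof -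
  have "xNG (Suc t) j = (\<Sum>i\<in>M. xNG t i * (1 - stopP (newf f a e k1 k2) (\<lambda>_ _. 0) \<theta> i) * Ptrans \<pi> (newf f a e k1 k2) \<theta> i j)"
    by simp
  also have "\<dots> = (\<Sum>i\<in>M - {k1,k2}. xNG t i * (1 - stopP (newf f a e k1 k2) (\<lambda>_ _. 0) \<theta> i) * Ptrans \<pi> (newf f a e k1 k2) \<theta> i j)"
    by (rule sum_K0[OF finMG K]) (use stopN K in auto)
  also have "\<dots> = (\<Sum>i\<in>M - {k1,k2}. xNG t i * Ptrans \<pi> (newf f a e k1 k2) \<theta> i j)"
    by (rule sum.cong) (use stopN in auto)
  finally show ?thesis .
qed

lemma stepO: "xG (Suc t) j = (\<Sum>i\<in>M - {k1,k2}. xG t i * (1 - e i) * Ptrans \<pi> f \<theta> i j)"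
proof -
  have "xG (Suc t) j = (\<Sum>i\<in>M. xG t i * (1 - e i) * Ptrans \<pi> f \<theta> i j)"
    by (simp, rule sum.cong) (use Eeq in auto)
  also have "\<dots> = (\<Sum>i\<in>M - {k1,k2}. xG t i * (1 - e i) * Ptrans \<pi> f \<theta> i j)"
    by (rule sum_K0[OF finMG K]) (use EK in auto)
  finally show ?thesis .
qed

lemma sim_nonK: "j \<in> M - {k1,k2} \<Longrightarrow> xNG t j = xG t j"
proof (induction t arbitrary: j)
  case 0
  then show ?case by (simp add: newg_def)
next
  case (Suc t)
  have "xNG (Suc t) j = (\<Sum>i\<in>M - {k1,k2}. xNG t i * Ptrans \<pi> (newf f a e k1 k2) \<theta> i j)" by (rule stepN)
  also have "\<dots> = (\<Sum>i\<in>M - {k1,k2}. xG t i * (1 - e i) * Ptrans \<pi> f \<theta> i j)"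
    by (rule sum.cong) (use Suc Pt_nonK[OF P V K E01 EK] in auto)
  also have "\<dots> = xG (Suc t) j" by (rule stepO[symmetric])
  finally show ?case .
qed

lemma sim_k1_Suc: "xNG (Suc t) k1 = xG (Suc t) k1 * a k1 + xG (Suc t) k2 * a k2 + (\<Sum>i\<in>M - {k1,k2}. xG t i * e i * a i)"
proof -
  have "xNG (Suc t) k1 = (\<Sum>i\<in>M - {k1,k2}. xNG t i * Ptrans \<pi> (newf f a e k1 k2) \<theta> i k1)" by (rule stepN)
  also have "\<dots> = (\<Sum>i\<in>M - {k1,k2}. xG t i * e i * a i + (xG t i * (1 - e i) * Ptrans \<pi> f \<theta> i k1) * a k1
                      + (xG t i * (1 - e i) * Ptrans \<pi> f \<theta> i k2) * a k2)"
  proof (rule sum.cong[OF refl])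
    fix i assume i: "i \<in> M - {k1,k2}"
    show "xNG t i * Ptrans \<pi> (newf f a e k1 k2) \<theta> i k1 = xG t i * e i * a i + (xG t i * (1 - e i) * Ptrans \<pi> f \<theta> i k1) * a k1
                      + (xG t i * (1 - e i) * Ptrans \<pi> f \<theta> i k2) * a k2"
      unfolding sim_nonK[OF i] Pt_k1[OF P V K E01 EK i] by (simp add: algebra_simps)
  qed
  also have "\<dots> = (\<Sum>i\<in>M - {k1,k2}. xG t i * e i * a i) + (\<Sum>i\<in>M - {k1,k2}. xG t i * (1 - e i) * Ptrans \<pi> f \<theta> i k1) * a k1
                  + (\<Sum>i\<in>M - {k1,k2}. xG t i * (1 - e i) * Ptrans \<pi> f \<theta> i k2) * a k2"
    by (simp add: sum.distrib sum_distrib_right)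
  also have "\<dots> = xG (Suc t) k1 * a k1 + xG (Suc t) k2 * a k2 + (\<Sum>i\<in>M - {k1,k2}. xG t i * e i * a i)"
    unfolding stepO by (simp add: algebra_simps)
  finally show ?thesis .
qed

lemma endprob_new: "endprob M \<pi> (newf f a e k1 k2) (newg g a k1 k2) (\<lambda>_ _. 0) \<theta> k1 = qv M \<pi> f g \<rho> \<theta> a"
proof -
  define A where "A t = xG t k1 * a k1 + xG t k2 * a k2" for t
  define B where "B t = (\<Sum>i\<in>M - {k1,k2}. xG t i * e i * a i)" for t
  define X where "X t = (\<Sum>i\<in>M. xG t i * stopP f \<rho> \<theta> i * a i)" for t
  have XAB: "X t = A t + B t" for t
  proof -
    have "X t = (\<Sum>i\<in>M. xG t i * e i * a i)" unfolding X_def by (rule sum.cong) (use Eeq in auto)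
    also have "\<dots> = xG t k1 * e k1 * a k1 + xG t k2 * e k2 * a k2 + (\<Sum>i\<in>M - {k1,k2}. xG t i * e i * a i)"
      by (rule sum_split_K[OF finMG K])
    finally show ?thesis unfolding A_def B_def using EK by simp
  qed
  have Xs: "X sums qv M \<pi> f g \<rho> \<theta> a" unfolding X_def by (rule qv_sums[OF P V S])
  have xnn: "i \<in> M \<Longrightarrow> 0 \<le> xG t i" for i t by (rule alive_nonneg[OF P V S])
  have ab: "i \<in> M \<Longrightarrow> 0 \<le> a i" for i using P by (simp add: is_protocol_def)
  have Ann: "0 \<le> A t" for t unfolding A_def using xnn ab K by (simp add: add_nonneg_nonneg mult_nonneg_nonneg)
  have Bnn: "0 \<le> B t" for t unfolding B_def using xnn ab E01
    by (intro sum_nonneg mult_nonneg_nonneg) auto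
  have As: "summable A"
    by (rule summable_comparison_test'[where g=X and N=0]) (use Xs XAB Ann Bnn sums_summable in auto)
  have Bs: "summable B"
    by (rule summable_comparison_test'[where g=X and N=0]) (use Xs XAB Ann Bnn sums_summable in auto)
  have simN: "xNG (Suc t) k1 = A (Suc t) + B t" for t
    unfolding A_def B_def by (rule sim_k1_Suc)
  have sim0: "xNG 0 k1 = A 0" unfolding A_def using K by (simp add: newg_def)
  have "(\<lambda>t. A (Suc t)) sums (suminf A - A 0)"
    using As by (simp add: sums_Suc_iff summable_sums)
  then have "(\<lambda>t. xNG (Suc t) k1) sums (suminf A - A 0 + suminf B)"
    unfolding simN using Bs by (intro sums_add) (auto intro: summable_sums)
  then have "(\<lambda>t. xNG t k1) sums (suminf A - A 0 + suminf B + xNG 0 k1)"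
    by (rule iffD1[OF sums_Suc_iff])
  then have s1: "(\<lambda>t. xNG t k1) sums (suminf A + suminf B)" using sim0 by simp
  have "X sums (suminf A + suminf B)" unfolding XAB[abs_def]
    by (intro sums_add summable_sums As Bs)
  then have eqq: "suminf A + suminf B = qv M \<pi> f g \<rho> \<theta> a" using Xs sums_unique2 by blast
  have "endprob M \<pi> (newf f a e k1 k2) (newg g a k1 k2) (\<lambda>_ _. 0) \<theta> k1 = (\<Sum>t. xNG t k1)"
    unfolding endprob_def using stopN K by simp
  also have "\<dots> = suminf A + suminf B" using s1 sums_unique by metis
  finally show ?thesis using eqq by simp
qed

end



context
  fixes M and \<pi> :: "theta \<Rightarrow> 's::finite \<Rightarrow> real" and f :: "nat \<Rightarrow> 's \<Rightarrow> nat \<Rightarrow> real"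
    and g :: "nat \<Rightarrow> real" and k1 k2 :: nat and p :: real
  assumes P: "is_protocol M f g (newa k1)" and V: "valid_signals \<pi>"
    and K: "k1 \<in> M" "k2 \<in> M" "k1 \<noteq> k2"
    and AK: "absorbing f k1" "absorbing f k2"
    and R: "\<forall>i\<in>M. \<exists>k\<in>{k1,k2}. (i,k) \<in> (edges M f)\<^sup>*"
    and p: "0 < p" "p < 1"
begin

lemma absH: "i \<in> M \<Longrightarrow> absorbing f i \<longleftrightarrow> i \<in> {k1,k2}"
proof
  assume i: "i \<in> M" and ab: "absorbing f i"
  obtain k where k: "k \<in> {k1,k2}" "(i,k) \<in> (edges M f)\<^sup>*" using R i by blast
  have "k = i" by (rule absorbing_no_escape[OF P i ab k(2)])
  then show "i \<in> {k1,k2}" using k by simp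
next
  assume "i \<in> {k1,k2}" then show "absorbing f i" using AK by auto
qed

lemma parsH: "parsimonious M \<pi> f (newa k1)"
proof -
  have A: "{i \<in> M. absorbing f i} = {k2, k1}" using absH K by auto
  have T: "(\<forall>\<theta>. transient M \<pi> f \<theta> i) \<and> newa k1 i = 0" if i: "i \<in> M - {k2, k1}" for i
  proof (intro conjI allI)
    show "newa k1 i = 0" using i by (auto simp: newa_def)
    fix \<theta>
    obtain k where k: "k \<in> {k1,k2}" "(i,k) \<in> (edges M f)\<^sup>*" using R i by blast
    show "transient M \<pi> f \<theta> i"
      by (rule transient_if_reach[OF P V _ _ _ _ k(2)]) (use i k K AK in auto)
  qed
  show ?thesis unfolding parsimonious_def
    apply (rule bexI[of _ k2])
     apply (rule bexI[of _ k1])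
    using A T K by (auto simp: newa_def)
qed

definition "ee \<sigma> \<theta> = endprob M \<pi> f g \<sigma> \<theta> k1"

lemma finH: "finite M" using P by (simp add: is_protocol_def)

lemma sum_newa: "(\<Sum>i\<in>M. h i * newa k1 i) = h k1"
proof -
  have "(\<Sum>i\<in>M. h i * newa k1 i) = (\<Sum>i\<in>M. if i = k1 then h i else 0)"
    by (rule sum.cong) (auto simp: newa_def)
  also have "\<dots> = h k1" using finH K by simp
  finally show ?thesis .
qed

lemma sum_newa': "(\<Sum>i\<in>M. h i * (1 - newa k1 i)) = (\<Sum>i\<in>M. h i) - h k1"
proof -
  have "(\<Sum>i\<in>M. h i * (1 - newa k1 i)) = (\<Sum>i\<in>M. h i - h i * newa k1 i)"
    by (rule sum.cong) (auto simp: algebra_simps)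
  also have "\<dots> = (\<Sum>i\<in>M. h i) - h k1" by (simp add: sum_subtractf sum_newa)
  finally show ?thesis .
qed

lemma US_H: "US p M \<pi> f g (newa k1) \<sigma> = p * ee \<sigma> H + (1 - p) * ee \<sigma> L"
  unfolding US_def ee_def sum_newa by simp

lemma S0: "valid_strategy M (\<lambda>_ _. 0)" by (simp add: valid_strategy_def)

lemma alive_mono:
  assumes S: "valid_strategy M \<sigma>"
  shows "j \<in> M \<Longrightarrow> alive M \<pi> f g \<sigma> \<theta> t j \<le> alive M \<pi> f g (\<lambda>_ _. 0) \<theta> t j"
proof (induction t arbitrary: j)
  case 0
  then show ?case by simp
next
  case (Suc t)
  show ?case
    unfolding alive.simps
  proof (rule sum_mono)
    fix i assume i: "i \<in> M"
    have a1: "0 \<le> alive M \<pi> f g \<sigma> \<theta> t i" by (rule alive_nonneg[OF P V S i])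
    have a2: "alive M \<pi> f g \<sigma> \<theta> t i \<le> alive M \<pi> f g (\<lambda>_ _. 0) \<theta> t i" by (rule Suc.IH[OF i])
    have s1: "0 \<le> 1 - stopP f \<sigma> \<theta> i" using stopP_bounds[OF S i, where f=f and \<theta>=\<theta>] by simp
    have s2: "1 - stopP f \<sigma> \<theta> i \<le> 1 - stopP f (\<lambda>_ _. 0) \<theta> i"
      using S i unfolding stopP_def valid_strategy_def by auto
    have pt: "0 \<le> Ptrans \<pi> f \<theta> i j" by (rule Ptrans_nonneg[OF P V i Suc.prems])
    show "alive M \<pi> f g \<sigma> \<theta> t i * (1 - stopP f \<sigma> \<theta> i) * Ptrans \<pi> f \<theta> i j
        \<le> alive M \<pi> f g (\<lambda>_ _. 0) \<theta> t i * (1 - stopP f (\<lambda>_ _. 0) \<theta> i) * Ptrans \<pi> f \<theta> i j"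
      by (intro mult_right_mono mult_mono a2 s2 s1 pt) (use a1 a2 in auto)
  qed
qed

lemma ee_mono: "valid_strategy M \<sigma> \<Longrightarrow> ee \<sigma> \<theta> \<le> ee (\<lambda>_ _. 0) \<theta>"
proof -
  assume S: "valid_strategy M \<sigma>"
  have st: "stopP f \<sigma>' \<theta> k1 = 1" for \<sigma>' using AK by (simp add: stopP_def)
  have s1: "summable (\<lambda>t. alive M \<pi> f g \<sigma> \<theta> t k1)"
    using endterm_summable[OF P V S K(1), of \<theta>] st by simp
  have s2: "summable (\<lambda>t. alive M \<pi> f g (\<lambda>_ _. 0) \<theta> t k1)"
    using endterm_summable[OF P V S0 K(1), of \<theta>] st by simp
  show ?thesis unfolding ee_def endprob_def st
    by (simp, rule suminf_le[OF _ s1 s2]) (use alive_mono[OF S K(1)] in auto)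
qed

lemma brH: "(\<lambda>_ _. 0) \<in> br p M \<pi> f g (newa k1)"
  unfolding br_def using S0 ee_mono p by (auto simp: US_H intro!: add_mono mult_left_mono)

lemma URH:
  assumes "\<sigma>' \<in> br p M \<pi> f g (newa k1)"
  shows "p * ee (\<lambda>_ _. 0) H + (1 - p) * (1 - ee (\<lambda>_ _. 0) L) \<le> UR p M \<pi> f g (newa k1) \<sigma>'"
proof -
  have S: "valid_strategy M \<sigma>'" using assms by (simp add: br_def)
  have opt: "US p M \<pi> f g (newa k1) (\<lambda>_ _. 0) \<le> US p M \<pi> f g (newa k1) \<sigma>'"
    using assms S0 by (simp add: br_def)
  have mH: "ee \<sigma>' H \<le> ee (\<lambda>_ _. 0) H" and mL: "ee \<sigma>' L \<le> ee (\<lambda>_ _. 0) L" using ee_mono[OF S] by auto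
  have eqH: "ee \<sigma>' H = ee (\<lambda>_ _. 0) H"
  proof -
    have "p * (ee (\<lambda>_ _. 0) H - ee \<sigma>' H) + (1 - p) * (ee (\<lambda>_ _. 0) L - ee \<sigma>' L) \<le> 0"
      using opt unfolding US_H by (simp add: algebra_simps)
    moreover have "0 \<le> (1 - p) * (ee (\<lambda>_ _. 0) L - ee \<sigma>' L)" using mL p by simp
    ultimately have "p * (ee (\<lambda>_ _. 0) H - ee \<sigma>' H) \<le> 0" by linarith
    then show ?thesis using mH p by (simp add: mult_le_0_iff)
  qed
  have reachS: "\<forall>i\<in>M. \<exists>j. (i,j) \<in> (edges M f)\<^sup>* \<and> 0 < stopP f \<sigma>' L j"
  proof
    fix i assume "i \<in> M"
    then obtain k where "k \<in> {k1,k2}" "(i,k) \<in> (edges M f)\<^sup>*" using R by blast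
    then show "\<exists>j. (i,j) \<in> (edges M f)\<^sup>* \<and> 0 < stopP f \<sigma>' L j" using AK by (auto simp: stopP_def)
  qed
  have tot: "(\<Sum>i\<in>M. endprob M \<pi> f g \<sigma>' L i) = 1"
    by (rule endprob_sum_1[OF P V S absorption[OF P V S reachS]])
  have "UR p M \<pi> f g (newa k1) \<sigma>' = p * ee \<sigma>' H + (1 - p) * (1 - ee \<sigma>' L)"
    unfolding UR_def ee_def sum_newa sum_newa' tot by simp
  then show ?thesis using eqH mL p by (simp add: mult_left_mono)
qed

lemma URH':
  assumes "\<sigma>' \<in> br p M \<pi> f g (newa k1)"
  shows "p * endprob M \<pi> f g (\<lambda>_ _. 0) H k1 + (1 - p) * (1 - endprob M \<pi> f g (\<lambda>_ _. 0) L k1) \<le> UR p M \<pi> f g (newa k1) \<sigma>'"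
  using URH[OF assms] unfolding ee_def .

end



lemma alive_cong:
  assumes "\<forall>i\<in>M. \<sigma> i \<theta> = \<sigma>' i \<theta>"
  shows "alive M \<pi> f g \<sigma> \<theta> t j = alive M \<pi> f g \<sigma>' \<theta> t j"
proof (induction t arbitrary: j)
  case 0 then show ?case by simp
next
  case (Suc t)
  show ?case by (simp, rule sum.cong) (use Suc assms in \<open>auto simp: stopP_def\<close>)
qed

lemma qv_cong:
  assumes "\<forall>i\<in>M. \<sigma> i \<theta> = \<sigma>' i \<theta>"
  shows "qv M \<pi> f g \<sigma> \<theta> b = qv M \<pi> f g \<sigma>' \<theta> b"
  unfolding qv_def endprob_def
proof -
  have ac: "alive M \<pi> f g \<sigma> \<theta> t j = alive M \<pi> f g \<sigma>' \<theta> t j" for t j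
    by (rule alive_cong) (rule assms)
  show "(\<Sum>i\<in>M. (\<Sum>t. alive M \<pi> f g \<sigma> \<theta> t i * stopP f \<sigma> \<theta> i) * b i) =
        (\<Sum>i\<in>M. (\<Sum>t. alive M \<pi> f g \<sigma>' \<theta> t i * stopP f \<sigma>' \<theta> i) * b i)"
    by (rule sum.cong[OF refl]) (use ac assms in \<open>auto simp: stopP_def\<close>)
qed

lemma US_qv: "US p M \<pi> f g a \<sigma> = p * qv M \<pi> f g \<sigma> H a + (1 - p) * qv M \<pi> f g \<sigma> L a"
  unfolding US_def qv_def by simp

lemma UR_qv: "UR p M \<pi> f g a \<sigma> = p * qv M \<pi> f g \<sigma> H a + (1 - p) * ((\<Sum>i\<in>M. endprob M \<pi> f g \<sigma> L i) - qv M \<pi> f g \<sigma> L a)"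
  unfolding UR_def qv_def by (simp add: algebra_simps sum_subtractf)

lemma UR_bound:
  assumes P: "is_protocol M f g a" and V: "valid_signals \<pi>" and S: "valid_strategy M \<sigma>" and p: "0 < p" "p < 1"
  shows "UR p M \<pi> f g a \<sigma> \<le> p * qv M \<pi> f g \<sigma> H a + (1 - p) * (1 - qv M \<pi> f g \<sigma> L a)"
  unfolding UR_qv using endprob_sum_le1[OF P V S, of L] p by (simp add: mult_left_mono)

lemma L_bound:
  assumes br: "\<sigma> \<in> br p M \<pi> f g a" and S: "valid_strategy M \<rho>" and p: "0 < p" "p < 1"
  shows "qv M \<pi> f g \<rho> L a \<le> qv M \<pi> f g \<sigma> L a"
proof -
  define \<sigma>m where "\<sigma>m = (\<lambda>i th. if th = H then \<sigma> i H else \<rho> i th)"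
  have S0: "valid_strategy M \<sigma>" using br by (simp add: br_def)
  have Sm: "valid_strategy M \<sigma>m" using S S0 unfolding \<sigma>m_def valid_strategy_def by auto
  have "US p M \<pi> f g a \<sigma>m \<le> US p M \<pi> f g a \<sigma>" using br Sm by (simp add: br_def)
  moreover have "qv M \<pi> f g \<sigma>m H a = qv M \<pi> f g \<sigma> H a" by (rule qv_cong) (simp add: \<sigma>m_def)
  moreover have "qv M \<pi> f g \<sigma>m L a = qv M \<pi> f g \<rho> L a" by (rule qv_cong) (simp add: \<sigma>m_def)
  ultimately show ?thesis unfolding US_qv using p by simp
qed

lemma finite_argmax:
  assumes "finite S" "S \<noteq> {}"
  obtains j where "j \<in> S" "\<forall>k\<in>S. (h::nat \<Rightarrow> real) k \<le> h j"
proof -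
  have "Max (h ` S) \<in> h ` S" using assms by simp
  then obtain j where j: "j \<in> S" "h j = Max (h ` S)" by auto
  have "\<forall>k\<in>S. h k \<le> h j" using j assms by simp
  then show ?thesis using that j by blast
qed

definition LMset :: "nat set \<Rightarrow> (nat \<Rightarrow> 's \<Rightarrow> nat \<Rightarrow> real) \<Rightarrow> (nat \<Rightarrow> real) \<Rightarrow> nat set" where
  "LMset M f a = {i \<in> M. \<forall>j. (i,j) \<in> (edges M f)\<^sup>* \<longrightarrow> a j \<le> a i}"

lemma reach_LM:
  assumes fin: "finite M" and i: "i \<in> M"
  shows "\<exists>j\<in>LMset M f a. (i,j) \<in> (edges M f)\<^sup>*"
proof -
  let ?S = "{j. (i,j) \<in> (edges M f)\<^sup>*}"
  have sub: "?S \<subseteq> M" using rtrancl_edges_M i by blast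
  then have finS: "finite ?S" using fin finite_subset by blast
  have "i \<in> ?S" by simp
  then obtain j where j: "j \<in> ?S" "\<forall>k\<in>?S. a k \<le> a j" using finite_argmax[OF finS, of a] by blast
  have "j \<in> LMset M f a"
    unfolding LMset_def using j sub by (auto intro: rtrancl_trans)
  then show ?thesis using j by blast
qed

lemma absorbing_LM:
  assumes P: "is_protocol M f g a" and i: "i \<in> M" and ab: "absorbing f i"
  shows "i \<in> LMset M f a"
  unfolding LMset_def using absorbing_no_escape[OF P i ab] i by auto



lemma trivial_endprob:
  assumes "\<forall>i<2. absorbing f0 i"
  shows "endprob {..<2} \<pi> f0 g0 \<sigma> \<theta> 1 = g0 1"
proof -
  have st: "stopP f0 \<sigma> \<theta> i = 1" if "i < 2" for i using assms that by (simp add: stopP_def)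
  have z: "alive {..<2} \<pi> f0 g0 \<sigma> \<theta> (Suc t) j = 0" for t j
    by (simp, rule sum.neutral) (use st in auto)
  have "(\<lambda>t. alive {..<2} \<pi> f0 g0 \<sigma> \<theta> t 1 * stopP f0 \<sigma> \<theta> 1) = (\<lambda>t. if t = 0 then g0 1 else 0)"
  proof
    fix t show "alive {..<2} \<pi> f0 g0 \<sigma> \<theta> t 1 * stopP f0 \<sigma> \<theta> 1 = (if t = 0 then g0 1 else 0)"
      using st[of 1] z by (cases t) auto
  qed
  moreover have "(\<lambda>t::nat. if t = 0 then g0 1 else (0::real)) sums g0 1"
    using sums_single[of 0 "\<lambda>_. g0 1"] by simp
  ultimately show ?thesis unfolding endprob_def by (simp add: sums_iff)
qed

theorem theorem1:
  fixes p :: real and \<pi> :: "theta \<Rightarrow> 's::finite \<Rightarrow> real" and m :: nat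
    and f :: "nat \<Rightarrow> 's \<Rightarrow> nat \<Rightarrow> real" and g a :: "nat \<Rightarrow> real"
    and \<sigma> :: "nat \<Rightarrow> theta \<Rightarrow> real"
  assumes "0 < p" and "p < 1"
    and "valid_signals \<pi>"
    and "2 \<le> m"
    and "is_protocol {..<m} f g a"
    and "\<not> parsimonious {..<m} \<pi> f a"
    and "\<sigma> \<in> br p {..<m} \<pi> f g a"
  shows "\<exists>m' f' g' a'. m' \<le> m \<and> is_protocol {..<m'} f' g' a' \<and> parsimonious {..<m'} \<pi> f' a'
           \<and> br p {..<m'} \<pi> f' g' a' \<noteq> {}
           \<and> (\<forall>\<sigma>'\<in>br p {..<m'} \<pi> f' g' a'. UR p {..<m} \<pi> f g a \<sigma> \<le> UR p {..<m'} \<pi> f' g' a' \<sigma>')"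
proof -
  let ?M = "{..<m}"
  have P: "is_protocol ?M f g a" and V: "valid_signals \<pi>" and br: "\<sigma> \<in> br p ?M \<pi> f g a"
    and p: "0 < p" "p < 1" using assms by auto
  have S: "valid_strategy ?M \<sigma>" using br by (simp add: br_def)
  have fin: "finite ?M" by simp
  have bound: "UR p ?M \<pi> f g a \<sigma> \<le> p * qv ?M \<pi> f g \<sigma> H a + (1 - p) * (1 - qv ?M \<pi> f g \<sigma> L a)"
    by (rule UR_bound[OF P V S p])
  let ?LM = "LMset ?M f a"
  have LMsub: "?LM \<subseteq> ?M" by (auto simp: LMset_def)
  have finLM: "finite ?LM" using LMsub finite_subset by blast
  show ?thesis
  proof (cases "\<exists>k1\<in>?LM. \<exists>k2\<in>?LM. k1 \<noteq> k2")
    case True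
    then obtain k1 k2 where k: "k1 \<in> ?LM" "k2 \<in> ?LM" "k1 \<noteq> k2" by blast
    define \<rho> where "\<rho> = (\<lambda>i (th::theta). if i \<in> ?LM then (1::real) else \<sigma> i H)"
    define e where "e = (\<lambda>i. stopP f \<rho> H i)"
    have S\<rho>: "valid_strategy ?M \<rho>" using S unfolding \<rho>_def valid_strategy_def by auto
    have e\<theta>: "\<forall>i\<in>?M. e i = stopP f \<rho> \<theta> i" for \<theta> unfolding e_def stopP_def \<rho>_def by simp
    have E01: "\<forall>i\<in>?M. 0 \<le> e i \<and> e i \<le> 1"
      using S unfolding e_def stopP_def \<rho>_def valid_strategy_def by auto
    have eLM: "e i = 1" if "i \<in> ?LM" for i using that unfolding e_def stopP_def \<rho>_def by simp
    have K: "k1 \<in> ?M" "k2 \<in> ?M" "k1 \<noteq> k2" using k LMsub by auto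
    have EK: "e k1 = 1" "e k2 = 1" using eLM k by auto
    have R0: "\<forall>i\<in>?M. \<exists>j. (i,j) \<in> (edges ?M f)\<^sup>* \<and> 0 < e j"
    proof
      fix i assume "i \<in> ?M"
      then obtain j where "j \<in> ?LM" "(i,j) \<in> (edges ?M f)\<^sup>*" using reach_LM[OF fin] by blast
      then show "\<exists>j. (i,j) \<in> (edges ?M f)\<^sup>* \<and> 0 < e j" using eLM by fastforce
    qed
    define f' where "f' = newf f a e k1 k2"
    define g' where "g' = newg g a k1 k2"
    have P': "is_protocol ?M f' g' (newa k1)" unfolding f'_def g'_def by (rule newprot[OF P V K E01 EK])
    have AK: "absorbing f' k1" "absorbing f' k2" using absorbing_K[OF P V K E01 EK] f'_def by auto
    have R: "\<forall>i\<in>?M. \<exists>k\<in>{k1,k2}. (i,k) \<in> (edges ?M f')\<^sup>*"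
      unfolding f'_def by (rule reach_new_all[OF P V K E01 EK R0])
    have w: "endprob ?M \<pi> f' g' (\<lambda>_ _. 0) \<theta> k1 = qv ?M \<pi> f g \<rho> \<theta> a" for \<theta>
      unfolding f'_def g'_def by (rule endprob_new[OF P V K E01 EK S\<rho> e\<theta> R0])
    have wH: "qv ?M \<pi> f g \<sigma> H a \<le> qv ?M \<pi> f g \<rho> H a"
    proof -
      have "qv ?M \<pi> f g \<sigma> H a \<le> qv ?M \<pi> f g (\<lambda>i th. if i \<in> ?LM then 1 else \<sigma> i th) H a"
        by (rule terminalize_set[OF P V S finLM LMsub]) (auto simp: LMset_def)
      also have "\<dots> = qv ?M \<pi> f g \<rho> H a" by (rule qv_cong) (simp add: \<rho>_def)
      finally show ?thesis .
    qed
    have wL: "qv ?M \<pi> f g \<rho> L a \<le> qv ?M \<pi> f g \<sigma> L a" by (rule L_bound[OF br S\<rho> p])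
    show ?thesis
    proof (intro exI conjI)
      show "m \<le> m" by simp
      show "is_protocol ?M f' g' (newa k1)" by (rule P')
      show "parsimonious ?M \<pi> f' (newa k1)" by (rule parsH[OF P' V K AK R p])
      show "br p ?M \<pi> f' g' (newa k1) \<noteq> {}" using brH[OF P' V K AK R p] by blast
      show "\<forall>\<sigma>'\<in>br p ?M \<pi> f' g' (newa k1). UR p ?M \<pi> f g a \<sigma> \<le> UR p ?M \<pi> f' g' (newa k1) \<sigma>'"
      proof
        fix \<sigma>' assume b': "\<sigma>' \<in> br p ?M \<pi> f' g' (newa k1)"
        have u: "p * qv ?M \<pi> f g \<rho> H a + (1 - p) * (1 - qv ?M \<pi> f g \<rho> L a) \<le> UR p ?M \<pi> f' g' (newa k1) \<sigma>'"
          using URH'[OF P' V K AK R p b'] unfolding w .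
        have "p * qv ?M \<pi> f g \<sigma> H a + (1 - p) * (1 - qv ?M \<pi> f g \<sigma> L a)
              \<le> p * qv ?M \<pi> f g \<rho> H a + (1 - p) * (1 - qv ?M \<pi> f g \<rho> L a)"
          using wH wL p by (intro add_mono mult_left_mono) auto
        then show "UR p ?M \<pi> f g a \<sigma> \<le> UR p ?M \<pi> f' g' (newa k1) \<sigma>'" using bound u by linarith
      qed
    qed
  next
    case False
    have "0 \<in> ?M" using assms(4) by simp
    then obtain i1 where i1: "i1 \<in> ?LM" using reach_LM[OF fin] by blast
    have LMeq: "?LM = {i1}" using False i1 by blast
    have i1M: "i1 \<in> ?M" using i1 LMsub by blast
    obtain j0 where j0: "j0 \<in> ?M" "\<forall>k\<in>?M. a k \<le> a j0"
      using finite_argmax[OF fin, of a] \<open>0 \<in> ?M\<close> by blast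
    have "j0 \<in> ?LM" unfolding LMset_def using j0 rtrancl_edges_M by blast
    then have j0i1: "j0 = i1" using LMeq by blast
    have amax: "\<forall>k\<in>?M. a k \<le> a i1" using j0 j0i1 by blast
    have a01: "0 \<le> a i1" "a i1 \<le> 1" using P i1M by (auto simp: is_protocol_def)
    have reach1: "\<forall>i\<in>?M. (i,i1) \<in> (edges ?M f)\<^sup>*"
    proof
      fix i assume "i \<in> ?M"
      then obtain j where "j \<in> ?LM" "(i,j) \<in> (edges ?M f)\<^sup>*" using reach_LM[OF fin] by blast
      then show "(i,i1) \<in> (edges ?M f)\<^sup>*" using LMeq by simp
    qed
    define \<rho> where "\<rho> = (\<lambda>i (th::theta). if i = i1 then (1::real) else 0)"
    have S\<rho>: "valid_strategy ?M \<rho>" unfolding \<rho>_def valid_strategy_def by auto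
    have st: "stopP f \<rho> L i = (if i = i1 then 1 else 0)" if "i \<in> ?M" for i
    proof (cases "absorbing f i")
      case True
      then have "i \<in> ?LM" by (rule absorbing_LM[OF P that])
      then show ?thesis using LMeq True by (simp add: stopP_def)
    next
      case False
      then show ?thesis by (simp add: stopP_def \<rho>_def)
    qed
    have reachS: "\<forall>i\<in>?M. \<exists>j. (i,j) \<in> (edges ?M f)\<^sup>* \<and> 0 < stopP f \<rho> L j"
      using reach1 st i1M by fastforce
    have tot: "(\<Sum>i\<in>?M. endprob ?M \<pi> f g \<rho> L i) = 1"
      by (rule endprob_sum_1[OF P V S\<rho> absorption[OF P V S\<rho> reachS]])
    have ep0: "endprob ?M \<pi> f g \<rho> L i = 0" if "i \<in> ?M" "i \<noteq> i1" for i
      unfolding endprob_def using st[OF that(1)] that(2) by simp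
    have sumd: "(\<Sum>i\<in>?M. endprob ?M \<pi> f g \<rho> L i * h i) = endprob ?M \<pi> f g \<rho> L i1 * h i1" for h
    proof -
      have "(\<Sum>i\<in>?M. endprob ?M \<pi> f g \<rho> L i * h i) = (\<Sum>i\<in>?M. if i = i1 then endprob ?M \<pi> f g \<rho> L i1 * h i1 else 0)"
        by (rule sum.cong) (use ep0 in auto)
      also have "\<dots> = endprob ?M \<pi> f g \<rho> L i1 * h i1" using i1M by simp
      finally show ?thesis .
    qed
    have e1: "endprob ?M \<pi> f g \<rho> L i1 = 1" using tot sumd[of "\<lambda>_. 1"] by simp
    have qL\<rho>: "qv ?M \<pi> f g \<rho> L a = a i1" unfolding qv_def sumd e1 by simp
    have qL: "a i1 \<le> qv ?M \<pi> f g \<sigma> L a" using L_bound[OF br S\<rho> p] qL\<rho> by simp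
    have qH: "qv ?M \<pi> f g \<sigma> H a \<le> a i1"
    proof -
      have "qv ?M \<pi> f g \<sigma> H a \<le> (\<Sum>i\<in>?M. endprob ?M \<pi> f g \<sigma> H i * a i1)"
        unfolding qv_def by (rule sum_mono, rule mult_left_mono) (use amax endprob_nonneg[OF P V S] in auto)
      also have "\<dots> = a i1 * (\<Sum>i\<in>?M. endprob ?M \<pi> f g \<sigma> H i)" by (simp add: sum_distrib_left mult.commute)
      also have "\<dots> \<le> a i1 * 1" using endprob_sum_le1[OF P V S, of H] a01 by (intro mult_left_mono) auto
      finally show ?thesis by simp
    qed
    have UB: "UR p ?M \<pi> f g a \<sigma> \<le> p * a i1 + (1 - p) * (1 - a i1)"
    proof -
      have "p * qv ?M \<pi> f g \<sigma> H a + (1 - p) * (1 - qv ?M \<pi> f g \<sigma> L a) \<le> p * a i1 + (1 - p) * (1 - a i1)"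
        using qH qL p by (intro add_mono mult_left_mono) auto
      then show ?thesis using bound by linarith
    qed
    define f0 where "f0 = (\<lambda>(i::nat) (s::'s) (j::nat). if j = i then (1::real) else 0)"
    define c where "c = (if 1/2 \<le> p then (1::nat) else 0)"
    define g0 where "g0 = (\<lambda>j::nat. if j = c then (1::real) else 0)"
    have c2: "c < 2" by (simp add: c_def)
    have P0: "is_protocol {..<2} f0 g0 (newa 1)"
      unfolding is_protocol_def is_dist_def f0_def g0_def newa_def using c2 by auto
    have AK0: "absorbing f0 1" "absorbing f0 0" by (auto simp: absorbing_def f0_def)
    have K0: "(1::nat) \<in> {..<2}" "(0::nat) \<in> {..<2}" "(1::nat) \<noteq> 0" by auto
    have R0: "\<forall>i\<in>{..<2::nat}. \<exists>k\<in>{1,0}. (i,k) \<in> (edges {..<2} f0)\<^sup>*"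
    proof
      fix i :: nat assume "i \<in> {..<2}"
      then have "i = 0 \<or> i = 1" by auto
      then show "\<exists>k\<in>{1,0}. (i,k) \<in> (edges {..<2} f0)\<^sup>*" by auto
    qed
    have all_abs: "\<forall>i<2. absorbing f0 i" by (auto simp: absorbing_def f0_def)
    have w0: "endprob {..<2} \<pi> f0 g0 (\<lambda>_ _. 0) \<theta> 1 = g0 1" for \<theta>
      by (rule trivial_endprob[OF all_abs])
    show ?thesis
    proof (intro exI conjI)
      show "2 \<le> m" by (rule assms(4))
      show "is_protocol {..<2} f0 g0 (newa 1)" by (rule P0)
      show "parsimonious {..<2} \<pi> f0 (newa 1)" by (rule parsH[OF P0 V K0 AK0 R0 p])
      show "br p {..<2} \<pi> f0 g0 (newa 1) \<noteq> {}" using brH[OF P0 V K0 AK0 R0 p] by blast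
      show "\<forall>\<sigma>'\<in>br p {..<2} \<pi> f0 g0 (newa 1). UR p ?M \<pi> f g a \<sigma> \<le> UR p {..<2} \<pi> f0 g0 (newa 1) \<sigma>'"
      proof
        fix \<sigma>' assume b': "\<sigma>' \<in> br p {..<2} \<pi> f0 g0 (newa 1)"
        have u: "p * g0 1 + (1 - p) * (1 - g0 1) \<le> UR p {..<2} \<pi> f0 g0 (newa 1) \<sigma>'"
          using URH'[OF P0 V K0 AK0 R0 p b'] unfolding w0 .
        have "p * a i1 + (1 - p) * (1 - a i1) \<le> p * g0 1 + (1 - p) * (1 - g0 1)"
        proof (cases "1/2 \<le> p")
          case True
          then have "g0 1 = 1" by (simp add: g0_def c_def)
          moreover have "0 \<le> (2 * p - 1) * (1 - a i1)" using True a01 by (intro mult_nonneg_nonneg) auto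
          ultimately show ?thesis by (simp add: algebra_simps)
        next
          case False
          then have "g0 1 = 0" by (simp add: g0_def c_def)
          moreover have "0 \<le> (1 - 2 * p) * a i1" using False a01 by (intro mult_nonneg_nonneg) auto
          ultimately show ?thesis by (simp add: algebra_simps)
        qed
        then show "UR p ?M \<pi> f g a \<sigma> \<le> UR p {..<2} \<pi> f0 g0 (newa 1) \<sigma>'" using UB u by linarith
      qed
    qed
  qed
qed


end
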